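(* Let $\nu$ be a probability measure on $\mathbb{R}$ with $H(\nu)$ finite, and let $\mu$ be a probability measure on $\mathbb{R}$. Assume that $$\int\log(1+|x|)\,d\nu(x)<\infty\quad\text{and}\quad\int\log(1+|x|)\,d\mu(x)<\infty.$$ Then $$\liminf_{t\to0}\frac{H(\mu*D_{t}^{*}(\nu))}{|\log t|}=\liminf_{t\to0}\frac{H(\mu*D_{t}^{*}(\chi_{[0,1]}))}{|\log t|},$$ where $\chi_{[0,1]}$ denotes the measure $\chi_{[0,1]}(x)\,dx$. In particular, the left-hand side does not depend on $\nu$.
   Context: For $t>0$, $D_t:\mathbb{R}\to\mathbb{R}$ is the dilation $x\mapsto tx$, and $D_t^*(\rho)$ is the push-forward of a measure $\rho$ by $D_t$. For a non-negative measurable function $q$, $H(q(x)\,dx)=\int q(x)\log q(x)\,dx$; this is used even when $q(x)\,dx$ is not a probability measure. The statement $H(\nu)$ finite means that $\nu$ is Lebesgue absolutely continuous and its density $q$ has $\int q\log q\,dx$ finite. *)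

theory Defs
  imports "HOL-Probability.Probability"
begin

definition ent_dens :: "(real \<Rightarrow> real) \<Rightarrow> ereal" where
  "ent_dens q =
     enn2ereal (\<integral>\<^sup>+ x. ennreal (q x * ln (q x)) \<partial>lborel)
     - enn2ereal (\<integral>\<^sup>+ x. ennreal (- (q x * ln (q x))) \<partial>lborel)"

definition ent :: "real measure \<Rightarrow> ereal" where
  "ent \<nu> = ent_dens (\<lambda>x. enn2real (RN_deriv lborel \<nu> x))"

definition dil :: "real \<Rightarrow> real measure \<Rightarrow> real measure" where
  "dil t \<rho> = distr \<rho> borel (\<lambda>x. t * x)"

end

theory Submission
  imports Defs "HOL-Real_Asymp.Real_Asymp"
begin


lemma ent_density:
  fixes f :: "real \<Rightarrow> ennreal"
  assumes [measurable]: "f \<in> borel_measurable borel"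
  shows "ent (density lborel f) = ent_dens (\<lambda>x. enn2real (f x))"
proof -
  have "AE x in lborel. f x = RN_deriv lborel (density lborel f) x"
    by (rule sigma_finite_measure.RN_deriv_unique[OF sigma_finite_lborel]) auto
  then have ae: "AE x in lborel. enn2real (RN_deriv lborel (density lborel f) x) = enn2real (f x)"
    by eventually_elim simp
  show ?thesis unfolding ent_def ent_dens_def
    apply (rule arg_cong2[where f="\<lambda>a b. enn2ereal a - enn2ereal b"])
    subgoal by (rule nn_integral_cong_AE) (use ae in eventually_elim, simp)
    subgoal by (rule nn_integral_cong_AE) (use ae in eventually_elim, simp)
    done
qed

lemma ent_dens_integrable:
  assumes "integrable lborel (\<lambda>x. p x * ln (p x))"
  shows "ent_dens p = ereal (\<integral>x. p x * ln (p x) \<partial>lborel)"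
proof -
  let ?h = "\<lambda>x. p x * ln (p x)"
  have i1: "integrable lborel (\<lambda>x. max 0 (?h x))" and i2: "integrable lborel (\<lambda>x. max 0 (- ?h x))"
    using assms by (auto intro!: integrable_max)
  have e1: "(\<integral>\<^sup>+x. ennreal (?h x) \<partial>lborel) = ennreal (\<integral>x. max 0 (?h x) \<partial>lborel)"
    by (subst nn_integral_eq_integral[symmetric]) (auto intro!: nn_integral_cong simp: i1 ennreal_max_0)
  have e2: "(\<integral>\<^sup>+x. ennreal (- ?h x) \<partial>lborel) = ennreal (\<integral>x. max 0 (- ?h x) \<partial>lborel)"
    by (subst nn_integral_eq_integral[symmetric]) (auto intro!: nn_integral_cong simp: i2 ennreal_max_0)
  have "(\<integral>x. ?h x \<partial>lborel) = (\<integral>x. max 0 (?h x) - max 0 (- ?h x) \<partial>lborel)"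
    by (rule Bochner_Integration.integral_cong) auto
  also have "\<dots> = (\<integral>x. max 0 (?h x) \<partial>lborel) - (\<integral>x. max 0 (- ?h x) \<partial>lborel)"
    using i1 i2 by simp
  finally show ?thesis unfolding ent_dens_def e1 e2
    by (simp add: integral_nonneg_AE)
qed



definition convr :: "real measure \<Rightarrow> (real \<Rightarrow> real) \<Rightarrow> real \<Rightarrow> real" where
  "convr M p x = enn2real (\<integral>\<^sup>+y. ennreal (p (x - y)) \<partial>M)"

lemma nn_integral_translate:
  fixes f :: "real \<Rightarrow> ennreal"
  assumes [measurable]: "f \<in> borel_measurable borel"
  shows "(\<integral>\<^sup>+x. f (x - y) \<partial>lborel) = (\<integral>\<^sup>+x. f x \<partial>lborel)"
  using nn_integral_real_affine[OF assms, of 1 "-y"] by simp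

lemma nn_integral_translate':
  fixes f :: "real \<Rightarrow> ennreal"
  assumes [measurable]: "f \<in> borel_measurable borel"
  shows "(\<integral>\<^sup>+x. f (x + y) \<partial>lborel) = (\<integral>\<^sup>+x. f x \<partial>lborel)"
  using nn_integral_real_affine[OF assms, of 1 "y"] by (simp add: add.commute)

lemma conv_fubini:
  fixes h :: "real \<times> real \<Rightarrow> ennreal"
  assumes "finite_measure M" and [measurable_cong]: "sets M = sets borel"
    and [measurable]: "h \<in> borel_measurable (lborel \<Otimes>\<^sub>M M)"
  shows "(\<integral>\<^sup>+x. (\<integral>\<^sup>+y. h (x, y) \<partial>M) \<partial>lborel) = (\<integral>\<^sup>+y. (\<integral>\<^sup>+x. h (x, y) \<partial>lborel) \<partial>M)"
proof -
  interpret M: finite_measure M by fact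
  interpret pair_sigma_finite lborel M
    by (simp add: M.sigma_finite_measure lborel.sigma_finite_measure_axioms pair_sigma_finite.intro)
  show ?thesis
    by (rule Fubini'[symmetric]) simp
qed

lemma conv_total:
  fixes f :: "real \<Rightarrow> ennreal"
  assumes "finite_measure M" and [measurable_cong]: "sets M = sets borel"
    and [measurable]: "f \<in> borel_measurable borel"
  shows "(\<integral>\<^sup>+x. (\<integral>\<^sup>+y. f (x - y) \<partial>M) \<partial>lborel) = emeasure M (space M) * (\<integral>\<^sup>+x. f x \<partial>lborel)"
proof -
  have "(\<integral>\<^sup>+x. (\<integral>\<^sup>+y. f (x - y) \<partial>M) \<partial>lborel) = (\<integral>\<^sup>+y. (\<integral>\<^sup>+x. f (x - y) \<partial>lborel) \<partial>M)"
    using conv_fubini[OF assms(1,2), of "\<lambda>(x,y). f (x - y)"] by simp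
  also have "\<dots> = (\<integral>\<^sup>+y. (\<integral>\<^sup>+x. f x \<partial>lborel) \<partial>M)"
    by (simp add: nn_integral_translate)
  finally show ?thesis by (simp add: mult.commute)
qed

lemma conv_density_gen:
  fixes f :: "real \<Rightarrow> ennreal"
  assumes "finite_measure M" and [measurable_cong]: "sets M = sets borel"
    and [measurable]: "f \<in> borel_measurable borel"
    and "finite_measure (density lborel f)"
  shows "M \<star> density lborel f = density lborel (\<lambda>x. \<integral>\<^sup>+y. f (x - y) \<partial>M)"
proof (rule measure_eqI)
  interpret M: finite_measure M by fact
  fix A assume "A \<in> sets (M \<star> density lborel f)"
  then have [measurable]: "A \<in> sets borel" by simp
  have "emeasure (M \<star> density lborel f) A =
      (\<integral>\<^sup>+x. \<integral>\<^sup>+y. indicator A (x + y) \<partial>density lborel f \<partial>M)"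
    using assms by (intro convolution_emeasure') auto
  also have "\<dots> = (\<integral>\<^sup>+x. \<integral>\<^sup>+y. f y * indicator A (x + y) \<partial>lborel \<partial>M)"
    by (intro nn_integral_cong) (simp add: nn_integral_density)
  also have "\<dots> = (\<integral>\<^sup>+x. \<integral>\<^sup>+y. f (y - x) * indicator A y \<partial>lborel \<partial>M)"
  proof (rule nn_integral_cong)
    fix x :: real
    show "(\<integral>\<^sup>+y. f y * indicator A (x + y) \<partial>lborel) = (\<integral>\<^sup>+y. f (y - x) * indicator A y \<partial>lborel)"
      using nn_integral_translate[of "\<lambda>y. f y * indicator A (x + y)" x] by simp
  qed
  also have "\<dots> = (\<integral>\<^sup>+y. \<integral>\<^sup>+x. f (y - x) * indicator A y \<partial>M \<partial>lborel)"
    using conv_fubini[OF assms(1,2), of "\<lambda>(y,x). f (y - x) * indicator A y"] by simp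
  also have "\<dots> = (\<integral>\<^sup>+y. (\<integral>\<^sup>+x. f (y - x) \<partial>M) * indicator A y \<partial>lborel)"
    by (intro nn_integral_cong) (simp add: nn_integral_multc)
  also have "\<dots> = emeasure (density lborel (\<lambda>x. \<integral>\<^sup>+y. f (x - y) \<partial>M)) A"
    by (simp add: emeasure_density)
  finally show "emeasure (M \<star> density lborel f) A = emeasure (density lborel (\<lambda>x. \<integral>\<^sup>+y. f (x - y) \<partial>M)) A" .
qed simp

lemma convr_measurable[measurable]:
  assumes "sets M = sets borel" "finite_measure M" and [measurable]: "p \<in> borel_measurable borel"
  shows "convr M p \<in> borel_measurable borel"
proof -
  interpret M: finite_measure M by fact
  have [measurable_cong]: "sets M = sets borel" by fact
  show ?thesis unfolding convr_def[abs_def]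
    by measurable
qed

lemma conv_density_real:
  assumes "finite_measure M" and [measurable_cong]: "sets M = sets borel"
    and [measurable]: "p \<in> borel_measurable borel" and nn: "\<And>x. 0 \<le> p x"
    and fin: "(\<integral>\<^sup>+x. ennreal (p x) \<partial>lborel) < \<infinity>"
  shows "AE x in lborel. (\<integral>\<^sup>+y. ennreal (p (x - y)) \<partial>M) = ennreal (convr M p x)"
    and "M \<star> density lborel (\<lambda>x. ennreal (p x)) = density lborel (\<lambda>x. ennreal (convr M p x))"
proof -
  interpret M: finite_measure M by fact
  have "(\<integral>\<^sup>+x. (\<integral>\<^sup>+y. ennreal (p (x - y)) \<partial>M) \<partial>lborel) \<noteq> \<infinity>"
    using fin M.emeasure_finite[of "space M"] by (subst conv_total[OF assms(1,2)]) (auto simp: ennreal_mult_eq_top_iff)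
  then have "AE x in lborel. (\<integral>\<^sup>+y. ennreal (p (x - y)) \<partial>M) \<noteq> \<infinity>"
    by (intro nn_integral_noteq_infinite) auto
  then show ae: "AE x in lborel. (\<integral>\<^sup>+y. ennreal (p (x - y)) \<partial>M) = ennreal (convr M p x)"
    by eventually_elim (auto simp: convr_def less_top)
  have "finite_measure (density lborel (\<lambda>x. ennreal (p x)))"
    using fin by (intro finite_measureI) (auto simp: emeasure_density)
  then have "M \<star> density lborel (\<lambda>x. ennreal (p x)) = density lborel (\<lambda>x. \<integral>\<^sup>+y. ennreal (p (x - y)) \<partial>M)"
    by (intro conv_density_gen assms) auto
  also have "\<dots> = density lborel (\<lambda>x. ennreal (convr M p x))"
    using convr_measurable[OF assms(2,1,3)] by (intro density_cong ae) auto
  finally show "M \<star> density lborel (\<lambda>x. ennreal (p x)) = density lborel (\<lambda>x. ennreal (convr M p x))" .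
qed



definition scale :: "real \<Rightarrow> (real \<Rightarrow> real) \<Rightarrow> real \<Rightarrow> real" where
  "scale t p x = p (x / t) / t"

definition pdens :: "(real \<Rightarrow> real) \<Rightarrow> bool" where
  "pdens p \<longleftrightarrow> p \<in> borel_measurable borel \<and> (\<forall>x. 0 \<le> p x) \<and> (\<integral>\<^sup>+x. ennreal (p x) \<partial>lborel) = 1"

lemma pdensD:
  assumes "pdens p"
  shows "p \<in> borel_measurable borel" "\<And>x. 0 \<le> p x" "(\<integral>\<^sup>+x. ennreal (p x) \<partial>lborel) = 1"
    "integrable lborel p" "(\<integral>x. p x \<partial>lborel) = 1"
proof -
  show m: "p \<in> borel_measurable borel" and nn: "\<And>x. 0 \<le> p x" and one: "(\<integral>\<^sup>+x. ennreal (p x) \<partial>lborel) = 1"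
    using assms by (auto simp: pdens_def)
  show "integrable lborel p"
    using m nn one by (intro integrableI_nonneg) auto
  show "(\<integral>x. p x \<partial>lborel) = 1"
    using m nn one by (subst integral_eq_nn_integral) auto
qed

lemma scale_measurable[measurable]:
  assumes [measurable]: "p \<in> borel_measurable borel"
  shows "scale t p \<in> borel_measurable borel"
  unfolding scale_def[abs_def] by measurable

lemma dil_density:
  assumes "0 < t" and [measurable]: "p \<in> borel_measurable borel" and nn: "\<And>x. 0 \<le> p x"
  shows "dil t (density lborel (\<lambda>x. ennreal (p x))) = density lborel (\<lambda>x. ennreal (scale t p x))"
proof (rule measure_eqI)
  fix A assume "A \<in> sets (dil t (density lborel (\<lambda>x. ennreal (p x))))"
  then have [measurable]: "A \<in> sets borel" by (simp add: dil_def)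
  have "emeasure (dil t (density lborel (\<lambda>x. ennreal (p x)))) A
      = (\<integral>\<^sup>+x. ennreal (p x) * indicator A (t * x) \<partial>lborel)"
  proof -
    have mA: "(*) t -` A \<in> sets borel"
      using measurable_sets[of "(*) t" borel borel A] by simp
    have "emeasure (dil t (density lborel (\<lambda>x. ennreal (p x)))) A = emeasure (density lborel (\<lambda>x. ennreal (p x))) ((*) t -` A)"
      unfolding dil_def by (subst emeasure_distr) auto
    also have "\<dots> = (\<integral>\<^sup>+x. ennreal (p x) * indicator ((*) t -` A) x \<partial>lborel)"
      using mA by (intro emeasure_density) auto
    finally show ?thesis by (simp add: indicator_def)
  qed
  also have "\<dots> = (\<integral>\<^sup>+x. ennreal (scale t p x) * indicator A x \<partial>lborel)"
  proof -
    have "(\<integral>\<^sup>+x. ennreal (scale t p x) * indicator A x \<partial>lborel)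
        = \<bar>t\<bar> * (\<integral>\<^sup>+x. ennreal (scale t p (0 + t * x)) * indicator A (0 + t * x) \<partial>lborel)"
      using assms(1) by (intro nn_integral_real_affine) auto
    also have "\<dots> = (\<integral>\<^sup>+x. ennreal t * (ennreal (scale t p (t * x)) * indicator A (t * x)) \<partial>lborel)"
      using assms(1) by (subst nn_integral_cmult) auto
    also have "\<dots> = (\<integral>\<^sup>+x. ennreal (p x) * indicator A (t * x) \<partial>lborel)"
      using assms(1) nn
      by (intro nn_integral_cong) (auto simp: scale_def ennreal_mult'[symmetric] mult.assoc[symmetric])
    finally show ?thesis by simp
  qed
  also have "\<dots> = emeasure (density lborel (\<lambda>x. ennreal (scale t p x))) A"
    by (simp add: emeasure_density)
  finally show "emeasure (dil t (density lborel (\<lambda>x. ennreal (p x)))) A = emeasure (density lborel (\<lambda>x. ennreal (scale t p x))) A" .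
qed (simp add: dil_def)

lemma convr_dil:
  assumes "0 < t" and [measurable_cong]: "sets M = sets borel" and [measurable]: "p \<in> borel_measurable borel"
    and nn: "\<And>x. 0 \<le> p x"
  shows "convr (dil t M) (scale t p) x = scale t (convr M p) x"
proof -
  have "(\<integral>\<^sup>+y. ennreal (scale t p (x - y)) \<partial>dil t M) = (\<integral>\<^sup>+w. ennreal (scale t p (x - t * w)) \<partial>M)"
    unfolding dil_def by (subst nn_integral_distr) auto
  also have "\<dots> = (\<integral>\<^sup>+w. ennreal (1 / t) * ennreal (p (x / t - w)) \<partial>M)"
    using assms(1) nn
    by (intro nn_integral_cong) (auto simp: scale_def ennreal_mult'[symmetric] diff_divide_distrib)
  also have "\<dots> = ennreal (1 / t) * (\<integral>\<^sup>+w. ennreal (p (x / t - w)) \<partial>M)"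
    by (rule nn_integral_cmult) auto
  finally show ?thesis
    using assms(1) by (simp add: convr_def scale_def enn2real_mult)
qed

lemma scale_pdens:
  assumes "0 < t" "pdens p"
  shows "pdens (scale t p)"
proof -
  note p = pdensD[OF assms(2)]
  have "(\<integral>\<^sup>+x. ennreal (scale t p x) \<partial>lborel) = \<bar>t\<bar> * (\<integral>\<^sup>+x. ennreal (scale t p (0 + t * x)) \<partial>lborel)"
    using assms(1) p(1) by (intro nn_integral_real_affine) auto
  also have "\<dots> = (\<integral>\<^sup>+x. ennreal t * ennreal (scale t p (t * x)) \<partial>lborel)"
    using assms(1) p(1) by (subst nn_integral_cmult) auto
  also have "\<dots> = (\<integral>\<^sup>+x. ennreal (p x) \<partial>lborel)"
    using assms(1) p(2) by (intro nn_integral_cong) (auto simp: scale_def ennreal_mult'[symmetric])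
  finally show ?thesis
    using p assms(1) by (auto simp: pdens_def scale_def)
qed

lemma scale_entropy:
  assumes "0 < t" "pdens p" and int: "integrable lborel (\<lambda>x. p x * ln (p x))"
  shows "integrable lborel (\<lambda>x. scale t p x * ln (scale t p x))"
    and "(\<integral>x. scale t p x * ln (scale t p x) \<partial>lborel) = (\<integral>x. p x * ln (p x) \<partial>lborel) - ln t"
proof -
  note p = pdensD[OF assms(2)]
  let ?S = "\<lambda>x. scale t p x * ln (scale t p x)"
  have eq: "?S (0 + t * x) = (1 / t) * (p x * ln (p x) - p x * ln t)" for x
  proof (cases "p x = 0")
    case False
    then have "0 < p x" using p(2)[of x] by auto
    then show ?thesis using assms(1) by (simp add: scale_def ln_div field_simps)
  qed (simp add: scale_def)
  have i2: "integrable lborel (\<lambda>x. (1 / t) * (p x * ln (p x) - p x * ln t))"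
    using int p(4) by (intro integrable_mult_right Bochner_Integration.integrable_diff integrable_mult_left)
  then have "integrable lborel (\<lambda>x. ?S (0 + t * x))" by (simp only: eq)
  then show "integrable lborel ?S"
    using lborel_integrable_real_affine_iff[of t ?S 0] assms(1) by simp
  have "(\<integral>x. ?S x \<partial>lborel) = \<bar>t\<bar> *\<^sub>R (\<integral>x. ?S (0 + t * x) \<partial>lborel)"
    using assms(1) by (intro lborel_integral_real_affine) auto
  also have "\<dots> = t * (\<integral>x. (1 / t) * (p x * ln (p x) - p x * ln t) \<partial>lborel)"
    using assms(1) by (simp only: eq) simp
  also have "\<dots> = (\<integral>x. p x * ln (p x) \<partial>lborel) - ln t"
    using assms(1) int p(4) p(5) by simp
  finally show "(\<integral>x. ?S x \<partial>lborel) = (\<integral>x. p x * ln (p x) \<partial>lborel) - ln t" .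
qed



definition psi :: "real \<Rightarrow> real \<Rightarrow> ennreal" where
  "psi a b = (if a = 0 then ennreal b else if b = 0 then \<infinity> else ennreal (a * ln (a / b) - a + b))"

lemma psi_measurable[measurable]:
  assumes [measurable]: "f \<in> borel_measurable M" "g \<in> borel_measurable M"
  shows "(\<lambda>x. psi (f x) (g x)) \<in> borel_measurable M"
  unfolding psi_def by measurable

lemma ln_ge_one_minus_inv: "0 < r \<Longrightarrow> 1 - 1 / r \<le> ln (r::real)"
  using ln_le_minus_one[of "1 / r"] by (simp add: ln_div)

lemma kl_nonneg: assumes "0 < a" "0 < b" shows "0 \<le> a * ln (a / b) - a + (b::real)"
proof -
  have "1 - 1 / (a / b) \<le> ln (a / b)" using assms by (intro ln_ge_one_minus_inv) auto
  then have "a * (1 - b / a) \<le> a * ln (a / b)" using assms by (intro mult_left_mono) auto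
  moreover have "a * (1 - b / a) = a - b" using assms by (simp add: field_simps)
  ultimately show ?thesis by simp
qed

lemma kl_tangent:
  assumes "0 < a" "0 < b" "0 < A" "0 < B"
  shows "a * ln (A / B) + b * (1 - A / B) \<le> a * ln (a / b) - a + (b::real)"
proof -
  define r where "r = (a / b) / (A / B)"
  have r: "0 < r" using assms by (simp add: r_def)
  have "1 - 1 / r \<le> ln r" by (rule ln_ge_one_minus_inv[OF r])
  then have "a * (1 - 1 / r) \<le> a * ln r" using assms by (intro mult_left_mono) auto
  moreover have "ln r = ln (a / b) - ln (A / B)" unfolding r_def using assms by (subst ln_div) auto
  moreover have "a * (1 / r) = b * (A / B)" using assms by (simp add: r_def field_simps)
  ultimately show ?thesis by (simp add: algebra_simps)
qed

lemma ennreal_integral_le_nn_integral: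
  fixes L :: "'a \<Rightarrow> real"
  assumes "integrable M L"
  shows "ennreal (\<integral>x. L x \<partial>M) \<le> (\<integral>\<^sup>+x. ennreal (L x) \<partial>M)"
proof -
  have i: "integrable M (\<lambda>x. max 0 (L x))" using assms by (intro integrable_max) auto
  have "(\<integral>x. L x \<partial>M) \<le> (\<integral>x. max 0 (L x) \<partial>M)"
    using assms i by (intro integral_mono) auto
  then have "ennreal (\<integral>x. L x \<partial>M) \<le> ennreal (\<integral>x. max 0 (L x) \<partial>M)" by (rule ennreal_leI)
  also have "\<dots> = (\<integral>\<^sup>+x. ennreal (max 0 (L x)) \<partial>M)"
    using i by (intro nn_integral_eq_integral[symmetric]) auto
  also have "\<dots> = (\<integral>\<^sup>+x. ennreal (L x) \<partial>M)" by (simp add: ennreal_max_0)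
  finally show ?thesis .
qed

lemma logsum:
  assumes "prob_space M"
    and ia: "integrable M a" and ib: "integrable M b"
    and a0: "\<And>y. 0 \<le> a y" and b0: "\<And>y. 0 \<le> b y"
    and A_def: "A = (\<integral>y. a y \<partial>M)" and B_def: "B = (\<integral>y. b y \<partial>M)"
  shows "psi A B \<le> (\<integral>\<^sup>+y. psi (a y) (b y) \<partial>M)"
proof -
  have [measurable]: "a \<in> borel_measurable M" "b \<in> borel_measurable M" using ia ib by auto
  have A0: "0 \<le> A" "0 \<le> B" unfolding A_def B_def using a0 b0 by (auto intro!: integral_nonneg_AE)
  show ?thesis
  proof (cases "A = 0")
    case True
    then have "AE y in M. a y = 0" using ia a0 unfolding A_def by (subst (asm) integral_nonneg_eq_0_iff_AE) auto
    then have "(\<integral>\<^sup>+y. psi (a y) (b y) \<partial>M) = (\<integral>\<^sup>+y. ennreal (b y) \<partial>M)"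
      by (intro nn_integral_cong_AE) (auto simp: psi_def)
    also have "\<dots> = ennreal B" unfolding B_def using ib b0 by (intro nn_integral_eq_integral) auto
    finally show ?thesis using True by (simp add: psi_def)
  next
    case Apos: False
    then have Ap: "0 < A" using A0 by auto
    show ?thesis
    proof (cases "B = 0")
      case True
      then have bz: "AE y in M. b y = 0" using ib b0 unfolding B_def by (subst (asm) integral_nonneg_eq_0_iff_AE) auto
      have "(\<integral>\<^sup>+y. psi (a y) (b y) \<partial>M) = \<infinity>"
      proof (rule ccontr)
        assume "(\<integral>\<^sup>+y. psi (a y) (b y) \<partial>M) \<noteq> \<infinity>"
        then have "AE y in M. psi (a y) (b y) \<noteq> \<infinity>" by (intro nn_integral_noteq_infinite) auto
        with bz have "AE y in M. a y = 0" by eventually_elim (auto simp: psi_def split: if_splits)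
        then have "A = 0" unfolding A_def by (subst integral_cong_AE[where g="\<lambda>_. 0"]) auto
        with Apos show False by simp
      qed
      then show ?thesis by simp
    next
      case False
      then have Bp: "0 < B" using A0 by auto
      define L where "L y = a y * ln (A / B) + b y * (1 - A / B)" for y
      have iL: "integrable M L" unfolding L_def using ia ib by auto
      have "(\<integral>y. L y \<partial>M) = A * ln (A / B) + B * (1 - A / B)"
        unfolding L_def A_def B_def using ia ib by simp
      also have "\<dots> = A * ln (A / B) - A + B" using Bp by (simp add: field_simps)
      finally have intL: "(\<integral>y. L y \<partial>M) = A * ln (A / B) - A + B" .
      have pt: "ennreal (L y) \<le> psi (a y) (b y)" for y
      proof -
        consider "a y = 0" | "a y > 0" "b y = 0" | "a y > 0" "b y > 0" using a0[of y] b0[of y] by force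
        then show ?thesis
        proof cases
          case 1
          have "b y * (1 - A / B) \<le> b y" using b0[of y] Ap Bp by (simp add: mult_left_le)
          then show ?thesis using 1 by (simp add: L_def psi_def ennreal_leI)
        next
          case 2 then show ?thesis by (simp add: psi_def)
        next
          case 3 then show ?thesis using kl_tangent[OF 3 Ap Bp]
            by (simp add: L_def psi_def ennreal_leI)
        qed
      qed
      have "psi A B = ennreal (\<integral>y. L y \<partial>M)" using Ap Bp by (simp add: psi_def intL)
      also have "\<dots> \<le> (\<integral>\<^sup>+y. ennreal (L y) \<partial>M)" by (rule ennreal_integral_le_nn_integral[OF iL])
      also have "\<dots> \<le> (\<integral>\<^sup>+y. psi (a y) (b y) \<partial>M)" by (intro nn_integral_mono pt)
      finally show ?thesis .
    qed
  qed
qed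

lemma xlnx_tangent:
  assumes "0 \<le> a" "0 < A"
  shows "A * ln A + (1 + ln A) * (a - A) \<le> a * ln (a::real)"
proof (cases "a = 0")
  case True then show ?thesis using assms by (simp add: algebra_simps)
next
  case False
  then have "0 < a" using assms by auto
  from kl_nonneg[OF this assms(2)] have "0 \<le> a * ln (a / A) - a + A" .
  then show ?thesis using \<open>0 < a\<close> assms by (simp add: ln_div algebra_simps)
qed

lemma jensen_pos:
  assumes "prob_space M"
    and ia: "integrable M a" and a0: "\<And>y. 0 \<le> a y" and A_def: "A = (\<integral>y. a y \<partial>M)"
  shows "ennreal (max 0 (A * ln A)) \<le> (\<integral>\<^sup>+y. ennreal (max 0 (a y * ln (a y))) \<partial>M)"
proof -
  have A0: "0 \<le> A" unfolding A_def using a0 by (auto intro!: integral_nonneg_AE)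
  show ?thesis
  proof (cases "A \<le> 1")
    case True
    then have "A * ln A \<le> 0"
      using A0 by (cases "A = 0") (auto intro!: mult_nonneg_nonpos)
    then show ?thesis by (simp add: max_def)
  next
    case False
    then have Ap: "0 < A" by auto
    define L where "L y = A * ln A + (1 + ln A) * (a y - A)" for y
    have fm: "finite_measure M" using assms(1) by (simp add: prob_space_def)
    have iL: "integrable M L" unfolding L_def using ia finite_measure.integrable_const[OF fm]
      by (intro Bochner_Integration.integrable_add integrable_mult_right Bochner_Integration.integrable_diff) auto
    have ic: "integrable M (\<lambda>_. c)" for c using finite_measure.integrable_const[OF fm] .
    have "(\<integral>y. L y \<partial>M) = (\<integral>y. A * ln A \<partial>M) + (1 + ln A) * ((\<integral>y. a y \<partial>M) - (\<integral>y. A \<partial>M))"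
    proof -
      have i1: "integrable M (\<lambda>y. (1 + ln A) * (a y - A))"
        by (intro integrable_mult_right Bochner_Integration.integrable_diff ia ic)
      have "(\<integral>y. L y \<partial>M) = (\<integral>y. A * ln A \<partial>M) + (\<integral>y. (1 + ln A) * (a y - A) \<partial>M)"
        unfolding L_def by (rule Bochner_Integration.integral_add[OF ic i1])
      moreover have "(\<integral>y. (1 + ln A) * (a y - A) \<partial>M) = (1 + ln A) * (\<integral>y. a y - A \<partial>M)"
        by (rule integral_mult_right_zero)
      moreover have "(\<integral>y. a y - A \<partial>M) = (\<integral>y. a y \<partial>M) - (\<integral>y. A \<partial>M)"
        by (rule Bochner_Integration.integral_diff[OF ia ic])
      ultimately show ?thesis by simp
    qed
    also have "\<dots> = A * ln A"
      using assms(1) A_def by (simp add: prob_space.prob_space)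
    finally have intL: "(\<integral>y. L y \<partial>M) = A * ln A" .
    have "ennreal (max 0 (A * ln A)) = ennreal (A * ln A)" by (simp add: ennreal_max_0)
    also have "\<dots> \<le> (\<integral>\<^sup>+y. ennreal (L y) \<partial>M)" unfolding intL[symmetric]
      by (rule ennreal_integral_le_nn_integral[OF iL])
    also have "\<dots> \<le> (\<integral>\<^sup>+y. ennreal (max 0 (a y * ln (a y))) \<partial>M)"
      using xlnx_tangent[OF a0 Ap] by (intro nn_integral_mono ennreal_leI) (auto simp: L_def intro: max.coboundedI2)
    finally show ?thesis .
  qed
qed



lemma psi_split:
  assumes a: "0 \<le> a" and b: "0 \<le> b" and ab: "0 < b \<or> a = 0"
  shows "psi a b + ennreal (max 0 (-(a * ln a))) + ennreal (a * max 0 (ln b)) + ennreal a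
       = ennreal (max 0 (a * ln a)) + ennreal (a * max 0 (- ln b)) + ennreal b"
proof (cases "a = 0")
  case True then show ?thesis by (simp add: psi_def)
next
  case False
  then have ap: "0 < a" and bp: "0 < b" using a ab by auto
  have k: "0 \<le> a * ln (a / b) - a + b" by (rule kl_nonneg[OF ap bp])
  have "psi a b = ennreal (a * ln (a / b) - a + b)" using ap bp by (simp add: psi_def)
  moreover have "ln (a / b) = ln a - ln b" using ap bp by (subst ln_div) auto
  moreover have "a * ln (a / b) - a + b + max 0 (-(a * ln a)) + a * max 0 (ln b) + a
       = max 0 (a * ln a) + a * max 0 (- ln b) + b"
  proof -
    have m1: "max 0 (a * ln a) - max 0 (-(a * ln a)) = a * ln a" by (simp add: max_def)
    have m2: "a * max 0 (ln b) - a * max 0 (- ln b) = a * ln b"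
      by (cases "0 \<le> ln b") (auto simp: max_def)
    have "a * ln (a / b) = a * ln a - a * ln b"
      using \<open>ln (a / b) = ln a - ln b\<close> by (simp add: right_diff_distrib)
    then show ?thesis using m1 m2 by linarith
  qed
  ultimately have eq: "psi a b = ennreal (a * ln (a / b) - a + b)"
    "a * ln (a / b) - a + b + max 0 (-(a * ln a)) + a * max 0 (ln b) + a
       = max 0 (a * ln a) + a * max 0 (- ln b) + b" by auto
  define k where "k = a * ln (a / b) - a + b"
  define n1 where "n1 = max 0 (-(a * ln a))"
  define p1 where "p1 = max 0 (a * ln a)"
  define m1 where "m1 = a * max 0 (ln b)"
  define m2 where "m2 = a * max 0 (- ln b)"
  have nn: "0 \<le> k" "0 \<le> n1" "0 \<le> p1" "0 \<le> m1" "0 \<le> m2"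
    using k ap unfolding k_def n1_def p1_def m1_def m2_def by auto
  have "psi a b + ennreal n1 + ennreal m1 + ennreal a = ennreal (k + n1 + m1 + a)"
    using nn ap eq(1) unfolding k_def[symmetric] by (simp add: ennreal_plus)
  also have "k + n1 + m1 + a = p1 + m2 + b"
    using eq(2) unfolding k_def n1_def m1_def p1_def m2_def by simp
  also have "ennreal (p1 + m2 + b) = ennreal p1 + ennreal m2 + ennreal b"
    using nn bp by (simp add: ennreal_plus)
  finally show ?thesis unfolding n1_def m1_def p1_def m2_def .
qed

lemma mult_max_ln:
  assumes "0 \<le> (b::real)"
  shows "b * max 0 (ln b) = max 0 (b * ln b)" "b * max 0 (- ln b) = max 0 (-(b * ln b))"
  using assms by (auto simp: max_def mult_le_0_iff zero_le_mult_iff)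

lemma iter_add:
  fixes f g :: "real \<Rightarrow> real \<Rightarrow> ennreal"
  assumes "finite_measure T" and [measurable_cong]: "sets T = sets borel"
    and [measurable]: "(\<lambda>(x, z). f x z) \<in> borel_measurable (lborel \<Otimes>\<^sub>M T)"
    "(\<lambda>(x, z). g x z) \<in> borel_measurable (lborel \<Otimes>\<^sub>M T)"
  shows "(\<integral>\<^sup>+x. \<integral>\<^sup>+z. f x z + g x z \<partial>T \<partial>lborel) = (\<integral>\<^sup>+x. \<integral>\<^sup>+z. f x z \<partial>T \<partial>lborel) + (\<integral>\<^sup>+x. \<integral>\<^sup>+z. g x z \<partial>T \<partial>lborel)"
proof -
  interpret T: finite_measure T by fact
  have "(\<integral>\<^sup>+x. \<integral>\<^sup>+z. f x z + g x z \<partial>T \<partial>lborel) = (\<integral>\<^sup>+x. (\<integral>\<^sup>+z. f x z \<partial>T) + (\<integral>\<^sup>+z. g x z \<partial>T) \<partial>lborel)"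
    by (intro nn_integral_cong nn_integral_add) auto
  also have "\<dots> = (\<integral>\<^sup>+x. \<integral>\<^sup>+z. f x z \<partial>T \<partial>lborel) + (\<integral>\<^sup>+x. \<integral>\<^sup>+z. g x z \<partial>T \<partial>lborel)"
    by (intro nn_integral_add) auto
  finally show ?thesis .
qed



lemma nn_pos_part:
  fixes f :: "'a \<Rightarrow> real"
  assumes "integrable M f"
  shows "(\<integral>\<^sup>+x. ennreal (max 0 (f x)) \<partial>M) = ennreal (\<integral>x. max 0 (f x) \<partial>M)"
  using assms by (intro nn_integral_eq_integral integrable_max) auto

lemma integral_pos_neg:
  fixes f :: "'a \<Rightarrow> real"
  assumes "integrable M f"
  shows "(\<integral>x. f x \<partial>M) = (\<integral>x. max 0 (f x) \<partial>M) - (\<integral>x. max 0 (- f x) \<partial>M)"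
proof -
  have "(\<integral>x. f x \<partial>M) = (\<integral>x. max 0 (f x) - max 0 (- f x) \<partial>M)"
    by (rule Bochner_Integration.integral_cong) auto
  also have "\<dots> = (\<integral>x. max 0 (f x) \<partial>M) - (\<integral>x. max 0 (- f x) \<partial>M)"
    using assms by (intro Bochner_Integration.integral_diff integrable_max) auto
  finally show ?thesis .
qed

lemma iter_mult:
  assumes "finite_measure T" and [measurable_cong]: "sets T = sets borel"
    and [measurable]: "p \<in> borel_measurable borel" "c \<in> borel_measurable borel"
    and nn: "\<And>x. 0 \<le> p x" "\<And>x. 0 \<le> c x" "\<And>x. 0 \<le> q x"
    and ae: "AE x in lborel. (\<integral>\<^sup>+z. ennreal (p (x - z)) \<partial>T) = ennreal (q x)"
  shows "(\<integral>\<^sup>+x. \<integral>\<^sup>+z. ennreal (p (x - z) * c x) \<partial>T \<partial>lborel) = (\<integral>\<^sup>+x. ennreal (q x * c x) \<partial>lborel)"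
proof (rule nn_integral_cong_AE)
  show "AE x in lborel. (\<integral>\<^sup>+z. ennreal (p (x - z) * c x) \<partial>T) = ennreal (q x * c x)"
    using ae
  proof eventually_elim
    case (elim x)
    have "(\<integral>\<^sup>+z. ennreal (p (x - z) * c x) \<partial>T) = (\<integral>\<^sup>+z. ennreal (p (x - z)) * ennreal (c x) \<partial>T)"
      using nn by (intro nn_integral_cong) (simp add: ennreal_mult)
    also have "\<dots> = (\<integral>\<^sup>+z. ennreal (p (x - z)) \<partial>T) * ennreal (c x)"
      by (rule nn_integral_multc) auto
    also have "\<dots> = ennreal (q x * c x)" using elim nn by (simp add: ennreal_mult)
    finally show ?case .
  qed
qed

lemma phi_identity:
  assumes "prob_space T" and [measurable_cong]: "sets T = sets borel" and pd: "pdens p"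
    and [measurable]: "q \<in> borel_measurable borel" and q0: "\<And>x. 0 \<le> q x"
    and ae: "AE x in lborel. (\<integral>\<^sup>+z. ennreal (p (x - z)) \<partial>T) = ennreal (q x)"
    and ip: "integrable lborel (\<lambda>x. p x * ln (p x))"
    and iq: "integrable lborel (\<lambda>x. q x * ln (q x))"
  shows "(\<integral>\<^sup>+x. \<integral>\<^sup>+z. psi (p (x - z)) (q x) \<partial>T \<partial>lborel)
          = ennreal ((\<integral>x. p x * ln (p x) \<partial>lborel) - (\<integral>x. q x * ln (q x) \<partial>lborel))"
    and "(\<integral>x. q x * ln (q x) \<partial>lborel) \<le> (\<integral>x. p x * ln (p x) \<partial>lborel)"
proof -
  interpret T: prob_space T by fact
  have fT: "finite_measure T" by unfold_locales
  note p = pdensD[OF pd]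
  have [measurable]: "p \<in> borel_measurable borel" by (rule p(1))
  have aeq: "AE x in lborel. AE z in T. 0 < q x \<or> p (x - z) = 0"
    using ae
  proof eventually_elim
    case (elim x)
    show ?case
    proof (cases "0 < q x")
      case False
      then have "q x = 0" using q0[of x] by auto
      then have "(\<integral>\<^sup>+z. ennreal (p (x - z)) \<partial>T) = 0" using elim by simp
      then have "AE z in T. ennreal (p (x - z)) = 0"
        by (subst (asm) nn_integral_0_iff_AE) auto
      then show ?thesis by eventually_elim (use p(2) in auto)
    qed simp
  qed
  let ?L = "\<lambda>x z. psi (p (x - z)) (q x) + ennreal (max 0 (-(p (x - z) * ln (p (x - z)))))
       + ennreal (p (x - z) * max 0 (ln (q x))) + ennreal (p (x - z))"
  let ?R = "\<lambda>x z. ennreal (max 0 (p (x - z) * ln (p (x - z)))) + ennreal (p (x - z) * max 0 (- ln (q x)))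
       + ennreal (q x)"
  have pt: "(\<integral>\<^sup>+z. ?L x z \<partial>T) = (\<integral>\<^sup>+z. ?R x z \<partial>T)"
    if h: "AE z in T. 0 < q x \<or> p (x - z) = 0" for x
  proof (rule nn_integral_cong_AE)
    show "AE z in T. ?L x z = ?R x z"
      using h by eventually_elim (intro psi_split, auto intro: p(2) q0)
  qed
  have "(\<integral>\<^sup>+x. \<integral>\<^sup>+z. ?L x z \<partial>T \<partial>lborel) = (\<integral>\<^sup>+x. \<integral>\<^sup>+z. ?R x z \<partial>T \<partial>lborel)"
  proof (rule nn_integral_cong_AE)
    show "AE x in lborel. (\<integral>\<^sup>+z. ?L x z \<partial>T) = (\<integral>\<^sup>+z. ?R x z \<partial>T)"
      using aeq by eventually_elim (rule pt)
  qed
  moreover have "(\<integral>\<^sup>+x. \<integral>\<^sup>+z. ?L x z \<partial>T \<partial>lborel) =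
      (\<integral>\<^sup>+x. \<integral>\<^sup>+z. psi (p (x - z)) (q x) \<partial>T \<partial>lborel)
      + (\<integral>\<^sup>+x. \<integral>\<^sup>+z. ennreal (max 0 (-(p (x - z) * ln (p (x - z))))) \<partial>T \<partial>lborel)
      + (\<integral>\<^sup>+x. \<integral>\<^sup>+z. ennreal (p (x - z) * max 0 (ln (q x))) \<partial>T \<partial>lborel)
      + (\<integral>\<^sup>+x. \<integral>\<^sup>+z. ennreal (p (x - z)) \<partial>T \<partial>lborel)"
    by ((subst iter_add[OF fT assms(2)]; (measurable)?)+)
  moreover have "(\<integral>\<^sup>+x. \<integral>\<^sup>+z. ?R x z \<partial>T \<partial>lborel) =
      (\<integral>\<^sup>+x. \<integral>\<^sup>+z. ennreal (max 0 (p (x - z) * ln (p (x - z)))) \<partial>T \<partial>lborel)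
      + (\<integral>\<^sup>+x. \<integral>\<^sup>+z. ennreal (p (x - z) * max 0 (- ln (q x))) \<partial>T \<partial>lborel)
      + (\<integral>\<^sup>+x. \<integral>\<^sup>+z. ennreal (q x) \<partial>T \<partial>lborel)"
    by ((subst iter_add[OF fT assms(2)]; (measurable)?)+)
  moreover have "(\<integral>\<^sup>+x. \<integral>\<^sup>+z. ennreal (max 0 (-(p (x - z) * ln (p (x - z))))) \<partial>T \<partial>lborel)
      = ennreal (\<integral>x. max 0 (- (p x * ln (p x))) \<partial>lborel)"
    using conv_total[OF fT assms(2), of "\<lambda>x. ennreal (max 0 (-(p x * ln (p x))))"] nn_pos_part[of lborel "\<lambda>x. - (p x * ln (p x))"] ip
    by (simp add: T.emeasure_space_1)
  moreover have "(\<integral>\<^sup>+x. \<integral>\<^sup>+z. ennreal (max 0 (p (x - z) * ln (p (x - z)))) \<partial>T \<partial>lborel)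
      = ennreal (\<integral>x. max 0 (p x * ln (p x)) \<partial>lborel)"
    using conv_total[OF fT assms(2), of "\<lambda>x. ennreal (max 0 (p x * ln (p x)))"] nn_pos_part[of lborel "\<lambda>x. (p x * ln (p x))"] ip
    by (simp add: T.emeasure_space_1)
  moreover have "(\<integral>\<^sup>+x. \<integral>\<^sup>+z. ennreal (p (x - z)) \<partial>T \<partial>lborel) = 1"
    using conv_total[OF fT assms(2), of "\<lambda>x. ennreal (p x)"] p(3)
    by (simp add: T.emeasure_space_1)
  moreover have q1: "(\<integral>\<^sup>+x. ennreal (q x) \<partial>lborel) = 1"
  proof -
    have "(\<integral>\<^sup>+x. ennreal (q x) \<partial>lborel) = (\<integral>\<^sup>+x. \<integral>\<^sup>+z. ennreal (p (x - z)) \<partial>T \<partial>lborel)"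
      using ae by (intro nn_integral_cong_AE) auto
    also have "\<dots> = 1"
      using conv_total[OF fT assms(2), of "\<lambda>x. ennreal (p x)"] p(3) by (simp add: T.emeasure_space_1)
    finally show ?thesis .
  qed
  moreover have "(\<integral>\<^sup>+x. \<integral>\<^sup>+z. ennreal (q x) \<partial>T \<partial>lborel) = 1"
    using q1 by (simp add: T.emeasure_space_1)
  moreover have "(\<integral>\<^sup>+x. \<integral>\<^sup>+z. ennreal (p (x - z) * max 0 (ln (q x))) \<partial>T \<partial>lborel)
      = ennreal (\<integral>x. max 0 (q x * ln (q x)) \<partial>lborel)"
    using iter_mult[OF fT assms(2) p(1), of "\<lambda>x. max 0 (ln (q x))" q] p(2) q0 ae
      nn_pos_part[of lborel "\<lambda>x. (q x * ln (q x))"] iq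
    by (simp add: mult_max_ln)
  moreover have "(\<integral>\<^sup>+x. \<integral>\<^sup>+z. ennreal (p (x - z) * max 0 (- ln (q x))) \<partial>T \<partial>lborel)
      = ennreal (\<integral>x. max 0 (- (q x * ln (q x))) \<partial>lborel)"
    using iter_mult[OF fT assms(2) p(1), of "\<lambda>x. max 0 (- ln (q x))" q] p(2) q0 ae
      nn_pos_part[of lborel "\<lambda>x. - (q x * ln (q x))"] iq
    by (simp add: mult_max_ln)
  ultimately have main: "(\<integral>\<^sup>+x. \<integral>\<^sup>+z. psi (p (x - z)) (q x) \<partial>T \<partial>lborel)
      + ennreal (\<integral>x. max 0 (- (p x * ln (p x))) \<partial>lborel)
      + ennreal (\<integral>x. max 0 (q x * ln (q x)) \<partial>lborel) + 1
    = ennreal (\<integral>x. max 0 (p x * ln (p x)) \<partial>lborel) + ennreal (\<integral>x. max 0 (- (q x * ln (q x))) \<partial>lborel) + 1"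
    by simp
  define Phi where "Phi = (\<integral>\<^sup>+x. \<integral>\<^sup>+z. psi (p (x - z)) (q x) \<partial>T \<partial>lborel)"
  define a1 where "a1 = (\<integral>x. max 0 (- (p x * ln (p x))) \<partial>lborel)"
  define a2 where "a2 = (\<integral>x. max 0 (q x * ln (q x)) \<partial>lborel)"
  define b1 where "b1 = (\<integral>x. max 0 (p x * ln (p x)) \<partial>lborel)"
  define b2 where "b2 = (\<integral>x. max 0 (- (q x * ln (q x))) \<partial>lborel)"
  have nn: "0 \<le> a1" "0 \<le> a2" "0 \<le> b1" "0 \<le> b2"
    unfolding a1_def a2_def b1_def b2_def by (auto intro!: integral_nonneg_AE)
  have main2: "Phi + ennreal (a1 + a2) = ennreal (b1 + b2)"
    using main nn unfolding Phi_def[symmetric] a1_def[symmetric] a2_def[symmetric] b1_def[symmetric] b2_def[symmetric]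
    by (simp add: ennreal_plus add.assoc ennreal_add_left_cancel add.commute[of _ 1])
  then have "Phi \<noteq> \<infinity>" by auto
  then obtain r where r: "Phi = ennreal r" "0 \<le> r" by (cases Phi) auto
  with main2 nn have "r + (a1 + a2) = b1 + b2" by (simp add: ennreal_plus[symmetric] del: ennreal_plus)
  moreover have "(\<integral>x. p x * ln (p x) \<partial>lborel) = b1 - a1" unfolding a1_def b1_def by (rule integral_pos_neg[OF ip])
  moreover have "(\<integral>x. q x * ln (q x) \<partial>lborel) = a2 - b2" unfolding a2_def b2_def by (rule integral_pos_neg[OF iq])
  ultimately have "r = (\<integral>x. p x * ln (p x) \<partial>lborel) - (\<integral>x. q x * ln (q x) \<partial>lborel)" by simp
  then show "(\<integral>\<^sup>+x. \<integral>\<^sup>+z. psi (p (x - z)) (q x) \<partial>T \<partial>lborel) = ennreal ((\<integral>x. p x * ln (p x) \<partial>lborel) - (\<integral>x. q x * ln (q x) \<partial>lborel))"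
    using r unfolding Phi_def by simp
  show "(\<integral>x. q x * ln (q x) \<partial>lborel) \<le> (\<integral>x. p x * ln (p x) \<partial>lborel)"
    using \<open>r = _\<close> r(2) by simp
qed



lemma ae_shift:
  fixes P :: "real \<Rightarrow> bool"
  assumes [measurable]: "Measurable.pred borel P" and "AE x in lborel. P x"
  shows "AE x in lborel. P (x - z)"
  using AE_borel_affine[of 1 P "-z", OF _ assms] by simp

lemma conv_integral:
  assumes "finite_measure M" and [measurable_cong]: "sets M = sets borel"
    and [measurable]: "p \<in> borel_measurable borel" and nn: "\<And>x. 0 \<le> p x"
    and h: "(\<integral>\<^sup>+y. ennreal (p (u - y)) \<partial>M) = ennreal (convr M p u)"
  shows "integrable M (\<lambda>y. p (u - y))" "(\<integral>y. p (u - y) \<partial>M) = convr M p u"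
proof -
  show "integrable M (\<lambda>y. p (u - y))"
    using h nn by (intro integrableI_nn_integral_finite[OF _ _ h]) auto
  show "(\<integral>y. p (u - y) \<partial>M) = convr M p u"
    using h nn by (subst integral_eq_nn_integral) (auto simp: convr_def)
qed

lemma convr_nonneg: "0 \<le> convr M p x"
  by (simp add: convr_def)

lemma phi_mono:
  assumes "prob_space Lm" and [measurable_cong]: "sets Lm = sets borel"
    and "prob_space T" and [measurable_cong]: "sets T = sets borel"
    and pd: "pdens p"
    and [measurable]: "g \<in> borel_measurable borel" and g0: "\<And>x. 0 \<le> g x"
    and gfin: "(\<integral>\<^sup>+x. ennreal (g x) \<partial>lborel) < \<infinity>"
  shows "(\<integral>\<^sup>+x. \<integral>\<^sup>+z. psi (convr Lm p (x - z)) (convr Lm g x) \<partial>T \<partial>lborel)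
       \<le> (\<integral>\<^sup>+x. \<integral>\<^sup>+z. psi (p (x - z)) (g x) \<partial>T \<partial>lborel)"
proof -
  interpret Lm: prob_space Lm by fact
  interpret T: prob_space T by fact
  have fL: "finite_measure Lm" and fT: "finite_measure T" by unfold_locales
  note p = pdensD[OF pd]
  have [measurable]: "p \<in> borel_measurable borel" by (rule p(1))
  have [measurable]: "convr Lm p \<in> borel_measurable borel" "convr Lm g \<in> borel_measurable borel"
    by (intro convr_measurable assms fL p(1))+
  have aeF: "AE x in lborel. (\<integral>\<^sup>+y. ennreal (p (x - y)) \<partial>Lm) = ennreal (convr Lm p x)"
    using p by (intro conv_density_real(1)[OF fL assms(2)]) auto
  have aeG: "AE x in lborel. (\<integral>\<^sup>+y. ennreal (g (x - y)) \<partial>Lm) = ennreal (convr Lm g x)"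
    using g0 gfin by (intro conv_density_real(1)[OF fL assms(2)]) auto
  let ?h = "\<lambda>z u. psi (p (u - z)) (g u)"
  have step: "(\<integral>\<^sup>+x. psi (convr Lm p (x - z)) (convr Lm g x) \<partial>lborel)
      \<le> (\<integral>\<^sup>+x. \<integral>\<^sup>+y. ?h z (x - y) \<partial>Lm \<partial>lborel)" for z
  proof (rule nn_integral_mono_AE)
    have aeF': "AE x in lborel. (\<integral>\<^sup>+y. ennreal (p (x - z - y)) \<partial>Lm) = ennreal (convr Lm p (x - z))"
      by (rule ae_shift[OF _ aeF]) measurable
    show "AE x in lborel. psi (convr Lm p (x - z)) (convr Lm g x) \<le> (\<integral>\<^sup>+y. ?h z (x - y) \<partial>Lm)"
      using aeF' aeG
    proof eventually_elim
      case (elim x)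
      note iF = conv_integral[OF fL assms(2) p(1) p(2) elim(1)]
      note iG = conv_integral[OF fL assms(2) assms(6) g0 elim(2)]
      have "psi (convr Lm p (x - z)) (convr Lm g x) \<le> (\<integral>\<^sup>+y. psi (p (x - z - y)) (g (x - y)) \<partial>Lm)"
        by (rule logsum[OF assms(1) iF(1) iG(1) p(2) g0 iF(2)[symmetric] iG(2)[symmetric]])
      also have "\<dots> = (\<integral>\<^sup>+y. ?h z (x - y) \<partial>Lm)"
        by (intro nn_integral_cong) (simp add: algebra_simps)
      finally show ?case .
    qed
  qed
  have "(\<integral>\<^sup>+x. \<integral>\<^sup>+z. psi (convr Lm p (x - z)) (convr Lm g x) \<partial>T \<partial>lborel)
      = (\<integral>\<^sup>+z. \<integral>\<^sup>+x. psi (convr Lm p (x - z)) (convr Lm g x) \<partial>lborel \<partial>T)"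
  proof -
    have m: "(\<lambda>(x,z). psi (convr Lm p (x - z)) (convr Lm g x)) \<in> borel_measurable (lborel \<Otimes>\<^sub>M T)"
      by measurable
    show ?thesis using conv_fubini[OF fT assms(4) m] by simp
  qed
  also have "\<dots> \<le> (\<integral>\<^sup>+z. \<integral>\<^sup>+x. \<integral>\<^sup>+y. ?h z (x - y) \<partial>Lm \<partial>lborel \<partial>T)"
    by (intro nn_integral_mono step)
  also have "\<dots> = (\<integral>\<^sup>+z. \<integral>\<^sup>+x. ?h z x \<partial>lborel \<partial>T)"
  proof (rule nn_integral_cong)
    fix z
    show "(\<integral>\<^sup>+x. \<integral>\<^sup>+y. ?h z (x - y) \<partial>Lm \<partial>lborel) = (\<integral>\<^sup>+x. ?h z x \<partial>lborel)"
      using conv_total[OF fL assms(2), of "?h z"] by (simp add: Lm.emeasure_space_1)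
  qed
  also have "\<dots> = (\<integral>\<^sup>+x. \<integral>\<^sup>+z. psi (p (x - z)) (g x) \<partial>T \<partial>lborel)"
  proof -
    have m: "(\<lambda>(x,z). psi (p (x - z)) (g x)) \<in> borel_measurable (lborel \<Otimes>\<^sub>M T)"
      by measurable
    show ?thesis using conv_fubini[OF fT assms(4) m] by simp
  qed
  finally show ?thesis .
qed



lemma convr_pdens:
  assumes "prob_space M" and [measurable_cong]: "sets M = sets borel" and pd: "pdens p"
  shows "pdens (convr M p)"
    and "AE x in lborel. (\<integral>\<^sup>+y. ennreal (p (x - y)) \<partial>M) = ennreal (convr M p x)"
    and "M \<star> density lborel (\<lambda>x. ennreal (p x)) = density lborel (\<lambda>x. ennreal (convr M p x))"
proof -
  interpret M: prob_space M by fact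
  have fM: "finite_measure M" by unfold_locales
  note p = pdensD[OF pd]
  show ae: "AE x in lborel. (\<integral>\<^sup>+y. ennreal (p (x - y)) \<partial>M) = ennreal (convr M p x)"
    using p by (intro conv_density_real(1)[OF fM assms(2)]) auto
  show "M \<star> density lborel (\<lambda>x. ennreal (p x)) = density lborel (\<lambda>x. ennreal (convr M p x))"
    using p by (intro conv_density_real(2)[OF fM assms(2)]) auto
  have "(\<integral>\<^sup>+x. ennreal (convr M p x) \<partial>lborel) = (\<integral>\<^sup>+x. \<integral>\<^sup>+y. ennreal (p (x - y)) \<partial>M \<partial>lborel)"
    using ae by (intro nn_integral_cong_AE) auto
  also have "\<dots> = 1"
    using conv_total[OF fM assms(2), of "\<lambda>x. ennreal (p x)"] p by (simp add: M.emeasure_space_1)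
  finally show "pdens (convr M p)"
    unfolding pdens_def using convr_measurable[OF assms(2) fM p(1)] by (auto simp: convr_nonneg)
qed

lemma pdens_finite_measure:
  "pdens p \<Longrightarrow> finite_measure (density lborel (\<lambda>x. ennreal (p x)))"
  by (intro finite_measureI) (auto simp: emeasure_density pdens_def)

lemma pdens_prob_space:
  "pdens p \<Longrightarrow> prob_space (density lborel (\<lambda>x. ennreal (p x)))"
  by (intro prob_spaceI) (auto simp: emeasure_density pdens_def)

lemma density_eq_ae:
  assumes "pdens p" "pdens q"
    and "density lborel (\<lambda>x. ennreal (p x)) = density lborel (\<lambda>x. ennreal (q x))"
  shows "AE x in lborel. p x = q x"
proof -
  note p = pdensD[OF assms(1)] and q = pdensD[OF assms(2)]
  have "AE x in lborel. ennreal (p x) = ennreal (q x)"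
    using assms(3) p(1) q(1)
    by (intro sigma_finite_measure.density_unique[OF sigma_finite_lborel]) auto
  then show ?thesis by eventually_elim (use p(2) q(2) in auto)
qed

lemma main_ineq:
  assumes "prob_space Lm" and [measurable_cong]: "sets Lm = sets borel"
    and "prob_space T" and [measurable_cong]: "sets T = sets borel"
    and pd: "pdens p"
    and ip: "integrable lborel (\<lambda>x. p x * ln (p x))"
    and ig: "integrable lborel (\<lambda>x. convr T p x * ln (convr T p x))"
    and iF: "integrable lborel (\<lambda>x. convr Lm p x * ln (convr Lm p x))"
    and iG: "integrable lborel (\<lambda>x. convr Lm (convr T p) x * ln (convr Lm (convr T p) x))"
  shows "(\<integral>x. convr Lm (convr T p) x * ln (convr Lm (convr T p) x) \<partial>lborel)
            \<le> (\<integral>x. convr Lm p x * ln (convr Lm p x) \<partial>lborel)"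
    and "(\<integral>x. convr Lm p x * ln (convr Lm p x) \<partial>lborel)
          - (\<integral>x. convr Lm (convr T p) x * ln (convr Lm (convr T p) x) \<partial>lborel)
          \<le> (\<integral>x. p x * ln (p x) \<partial>lborel) - (\<integral>x. convr T p x * ln (convr T p x) \<partial>lborel)"
proof -
  interpret Lm: prob_space Lm by fact
  interpret T: prob_space T by fact
  have fL: "finite_measure Lm" and fT: "finite_measure T" by unfold_locales
  define g where "g = convr T p"
  define F where "F = convr Lm p"
  define G where "G = convr Lm g"
  note p = pdensD[OF pd]
  have pg: "pdens g" and aeg: "AE x in lborel. (\<integral>\<^sup>+y. ennreal (p (x - y)) \<partial>T) = ennreal (g x)"
    and dg: "T \<star> density lborel (\<lambda>x. ennreal (p x)) = density lborel (\<lambda>x. ennreal (g x))"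
    unfolding g_def by (rule convr_pdens[OF assms(3,4) pd])+
  have pF: "pdens F" and dF: "Lm \<star> density lborel (\<lambda>x. ennreal (p x)) = density lborel (\<lambda>x. ennreal (F x))"
    unfolding F_def by (rule convr_pdens[OF assms(1,2) pd])+
  have pG: "pdens G" and dG: "Lm \<star> density lborel (\<lambda>x. ennreal (g x)) = density lborel (\<lambda>x. ennreal (G x))"
    unfolding G_def by (rule convr_pdens[OF assms(1,2) pg])+
  have pTF: "pdens (convr T F)" and aeTF: "AE x in lborel. (\<integral>\<^sup>+y. ennreal (F (x - y)) \<partial>T) = ennreal (convr T F x)"
    and dTF: "T \<star> density lborel (\<lambda>x. ennreal (F x)) = density lborel (\<lambda>x. ennreal (convr T F x))"
    by (rule convr_pdens[OF assms(3,4) pF])+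
  have "density lborel (\<lambda>x. ennreal (convr T F x)) = (T \<star> (Lm \<star> density lborel (\<lambda>x. ennreal (p x))))"
    using dTF dF by simp
  also have "\<dots> = ((T \<star> Lm) \<star> density lborel (\<lambda>x. ennreal (p x)))"
    using fL fT pdens_finite_measure[OF pd] assms(2,4) by (intro convolution_associative) auto
  also have "(T \<star> Lm) = (Lm \<star> T)"
    using fL fT assms(2,4) by (intro convolution_commutative) auto
  also have "((Lm \<star> T) \<star> density lborel (\<lambda>x. ennreal (p x))) = (Lm \<star> (T \<star> density lborel (\<lambda>x. ennreal (p x))))"
    using fL fT pdens_finite_measure[OF pd] assms(2,4) by (intro convolution_associative[symmetric]) auto
  also have "\<dots> = density lborel (\<lambda>x. ennreal (G x))" using dg dG by simp
  finally have "AE x in lborel. convr T F x = G x" by (rule density_eq_ae[OF pTF pG])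
  with aeTF have aeG: "AE x in lborel. (\<integral>\<^sup>+y. ennreal (F (x - y)) \<partial>T) = ennreal (G x)"
    by eventually_elim simp
  note pgD = pdensD[OF pg] and pGD = pdensD[OF pG]
  have id1: "(\<integral>\<^sup>+x. \<integral>\<^sup>+z. psi (p (x - z)) (g x) \<partial>T \<partial>lborel)
      = ennreal ((\<integral>x. p x * ln (p x) \<partial>lborel) - (\<integral>x. g x * ln (g x) \<partial>lborel))"
    by (rule phi_identity(1)[OF assms(3,4) pd pgD(1) pgD(2) aeg ip ig[folded g_def]])
  have id2: "(\<integral>\<^sup>+x. \<integral>\<^sup>+z. psi (F (x - z)) (G x) \<partial>T \<partial>lborel)
      = ennreal ((\<integral>x. F x * ln (F x) \<partial>lborel) - (\<integral>x. G x * ln (G x) \<partial>lborel))"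
    and le2: "(\<integral>x. G x * ln (G x) \<partial>lborel) \<le> (\<integral>x. F x * ln (F x) \<partial>lborel)"
    by (rule phi_identity[OF assms(3,4) pF pGD(1) pGD(2) aeG iF[folded F_def] iG[folded g_def, folded G_def]])+
  have le1: "(\<integral>x. g x * ln (g x) \<partial>lborel) \<le> (\<integral>x. p x * ln (p x) \<partial>lborel)"
    by (rule phi_identity(2)[OF assms(3,4) pd pgD(1) pgD(2) aeg ip ig[folded g_def]])
  have "(\<integral>\<^sup>+x. \<integral>\<^sup>+z. psi (F (x - z)) (G x) \<partial>T \<partial>lborel) \<le> (\<integral>\<^sup>+x. \<integral>\<^sup>+z. psi (p (x - z)) (g x) \<partial>T \<partial>lborel)"
    unfolding F_def G_def using pgD
    by (intro phi_mono[OF assms(1,2,3,4) pd]) auto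
  then have "ennreal ((\<integral>x. F x * ln (F x) \<partial>lborel) - (\<integral>x. G x * ln (G x) \<partial>lborel))
      \<le> ennreal ((\<integral>x. p x * ln (p x) \<partial>lborel) - (\<integral>x. g x * ln (g x) \<partial>lborel))"
    unfolding id1 id2 .
  then have "(\<integral>x. F x * ln (F x) \<partial>lborel) - (\<integral>x. G x * ln (G x) \<partial>lborel)
      \<le> (\<integral>x. p x * ln (p x) \<partial>lborel) - (\<integral>x. g x * ln (g x) \<partial>lborel)"
    using le1 by (subst (asm) ennreal_le_iff) auto
  then show "(\<integral>x. convr Lm p x * ln (convr Lm p x) \<partial>lborel)
          - (\<integral>x. convr Lm (convr T p) x * ln (convr Lm (convr T p) x) \<partial>lborel)
          \<le> (\<integral>x. p x * ln (p x) \<partial>lborel) - (\<integral>x. convr T p x * ln (convr T p x) \<partial>lborel)"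
    unfolding F_def G_def g_def .
  show "(\<integral>x. convr Lm (convr T p) x * ln (convr Lm (convr T p) x) \<partial>lborel)
            \<le> (\<integral>x. convr Lm p x * ln (convr Lm p x) \<partial>lborel)"
    using le2 unfolding F_def G_def g_def .
qed



lemma inv_sq_finite: "(\<integral>\<^sup>+x. ennreal (inverse (1 + x^2)) \<partial>lborel) < \<infinity>"
proof -
  have "integrable lborel (\<lambda>x::real. inverse (1 + x^2))"
    using integrable_inverse_1_plus_square unfolding set_integrable_def
    by (simp add: einterval_iff)
  then have "(\<integral>\<^sup>+x. ennreal (norm (inverse (1 + (x::real)^2))) \<partial>lborel) < \<infinity>"
    by (simp only: integrable_iff_bounded)
  also have "(\<integral>\<^sup>+x. ennreal (norm (inverse (1 + (x::real)^2))) \<partial>lborel) = (\<integral>\<^sup>+x. ennreal (inverse (1 + (x::real)^2)) \<partial>lborel)"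
    by (intro nn_integral_cong) (simp add: add_pos_nonneg)
  finally show ?thesis .
qed

lemma neg_xlnx_sqrt:
  assumes "0 < a" shows "-(a * ln a) \<le> 2 * sqrt a"
proof -
  have s: "0 < sqrt a" using assms by simp
  have "ln (inverse (sqrt a)) \<le> inverse (sqrt a) - 1" using s by (intro ln_le_minus_one) auto
  then have "- (ln a / 2) \<le> inverse (sqrt a)" using assms by (simp add: ln_inverse ln_sqrt)
  then have "- ln a \<le> 2 * inverse (sqrt a)" by simp
  then have "a * (- ln a) \<le> a * (2 * inverse (sqrt a))" using assms by (intro mult_left_mono) auto
  also have "a * (2 * inverse (sqrt a)) = 2 * sqrt a"
    using assms by (simp add: field_simps)
  finally show ?thesis by simp
qed

lemma neg_xlnx_bound:
  fixes x :: real
  assumes a: "0 \<le> a"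
  shows "max 0 (-(a * ln a)) \<le> 4 * (a * ln (1 + \<bar>x\<bar>)) + 2 * inverse (1 + x^2)"
proof -
  define w where "w = 1 + \<bar>x\<bar>"
  have w1: "1 \<le> w" by (simp add: w_def)
  have lw: "0 \<le> ln w" using w1 by simp
  have i0: "0 \<le> inverse (1 + x^2)" by (simp add: add_pos_nonneg)
  have t1: "0 \<le> 4 * (a * ln w)" using a lw by simp
  have "-(a * ln a) \<le> 4 * (a * ln w) + 2 * inverse (1 + x^2)"
  proof (cases "a = 0")
    case True then show ?thesis using t1 i0 by simp
  next
    case False
    then have ap: "0 < a" using a by auto
    show ?thesis
    proof (cases "inverse (w^4) \<le> a")
      case True
      have "ln (inverse (w^4)) \<le> ln a" using True w1 by (intro ln_mono) auto
      then have "- ln a \<le> 4 * ln w" by (simp add: ln_inverse ln_realpow)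
      then have "a * (- ln a) \<le> a * (4 * ln w)" using ap by (intro mult_left_mono) auto
      then have "-(a * ln a) \<le> 4 * (a * ln w)" by (simp add: algebra_simps)
      then show ?thesis using i0 by linarith
    next
      case False
      then have "a < (inverse (w^2))^2" by (simp add: power_inverse[symmetric] power_mult[symmetric])
      then have "sqrt a < sqrt ((inverse (w^2))^2)" by (rule real_sqrt_less_mono)
      also have "\<dots> = inverse (w^2)" using w1 by simp
      also have "\<dots> \<le> inverse (1 + x^2)"
      proof -
        have "1 + x^2 \<le> w^2" unfolding w_def by (simp add: power2_eq_square algebra_simps)
        then show ?thesis by (intro le_imp_inverse_le) (auto simp: add_pos_nonneg)
      qed
      finally have "2 * sqrt a \<le> 2 * inverse (1 + x^2)" by simp
      with neg_xlnx_sqrt[OF ap] t1 show ?thesis by simp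
    qed
  qed
  then show ?thesis using t1 i0 unfolding w_def by simp
qed

lemma entropy_integrable:
  assumes pd: "pdens p"
    and lm: "(\<integral>\<^sup>+x. ennreal (p x * ln (1 + \<bar>x\<bar>)) \<partial>lborel) < \<infinity>"
    and pos: "(\<integral>\<^sup>+x. ennreal (max 0 (p x * ln (p x))) \<partial>lborel) < \<infinity>"
  shows "integrable lborel (\<lambda>x. p x * ln (p x))"
proof -
  note p = pdensD[OF pd]
  have [measurable]: "p \<in> borel_measurable borel" by (rule p(1))
  have "(\<integral>\<^sup>+x. ennreal (max 0 (-(p x * ln (p x)))) \<partial>lborel)
      \<le> (\<integral>\<^sup>+x. ennreal 4 * ennreal (p x * ln (1 + \<bar>x\<bar>)) + ennreal 2 * ennreal (inverse (1 + x^2)) \<partial>lborel)"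
  proof (rule nn_integral_mono)
    fix x
    have "ennreal (max 0 (-(p x * ln (p x)))) \<le> ennreal (4 * (p x * ln (1 + \<bar>x\<bar>)) + 2 * inverse (1 + x^2))"
      by (intro ennreal_leI neg_xlnx_bound p(2))
    also have "\<dots> = ennreal 4 * ennreal (p x * ln (1 + \<bar>x\<bar>)) + ennreal 2 * ennreal (inverse (1 + x^2))"
      using p(2)[of x] by (simp add: ennreal_plus ennreal_mult add_pos_nonneg)
    finally show "ennreal (max 0 (-(p x * ln (p x)))) \<le> ennreal 4 * ennreal (p x * ln (1 + \<bar>x\<bar>)) + ennreal 2 * ennreal (inverse (1 + x^2))" .
  qed
  also have "\<dots> = ennreal 4 * (\<integral>\<^sup>+x. ennreal (p x * ln (1 + \<bar>x\<bar>)) \<partial>lborel) + ennreal 2 * (\<integral>\<^sup>+x. ennreal (inverse (1 + x^2)) \<partial>lborel)"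
    by (simp add: nn_integral_add nn_integral_cmult)
  also have "\<dots> < \<infinity>" using lm inv_sq_finite by (simp add: ennreal_mult_less_top)
  finally have neg: "(\<integral>\<^sup>+x. ennreal (max 0 (-(p x * ln (p x)))) \<partial>lborel) < \<infinity>" .
  have "(\<integral>\<^sup>+x. ennreal (norm (p x * ln (p x))) \<partial>lborel)
      = (\<integral>\<^sup>+x. ennreal (max 0 (p x * ln (p x))) + ennreal (max 0 (-(p x * ln (p x)))) \<partial>lborel)"
    by (intro nn_integral_cong) (auto simp: max_def ennreal_plus[symmetric] simp del: ennreal_plus)
  also have "\<dots> = (\<integral>\<^sup>+x. ennreal (max 0 (p x * ln (p x))) \<partial>lborel) + (\<integral>\<^sup>+x. ennreal (max 0 (-(p x * ln (p x)))) \<partial>lborel)"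
    by (intro nn_integral_add) auto
  also have "\<dots> < \<infinity>" using pos neg by simp
  finally show ?thesis by (intro integrableI_bounded) auto
qed

lemma pos_bounded:
  assumes pd: "pdens p" and C: "\<And>x. p x \<le> C" "0 < C"
  shows "(\<integral>\<^sup>+x. ennreal (max 0 (p x * ln (p x))) \<partial>lborel) < \<infinity>"
proof -
  note p = pdensD[OF pd]
  have [measurable]: "p \<in> borel_measurable borel" by (rule p(1))
  have pt: "max 0 (a * ln a) \<le> a * max 0 (ln C)" if "0 \<le> a" "a \<le> C" for a
  proof (cases "a \<le> 1")
    case True
    then have "a * ln a \<le> 0" using that by (cases "a = 0") (auto intro!: mult_nonneg_nonpos)
    then show ?thesis using that by (auto simp: max_def)
  next
    case False
    then have "ln a \<le> ln C" using that by (intro ln_mono) auto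
    then have "a * ln a \<le> a * max 0 (ln C)" using that by (intro mult_left_mono) auto
    moreover have "0 \<le> a * max 0 (ln C)" using that by auto
    ultimately show ?thesis by simp
  qed
  have "(\<integral>\<^sup>+x. ennreal (max 0 (p x * ln (p x))) \<partial>lborel) \<le> (\<integral>\<^sup>+x. ennreal (p x) * ennreal (max 0 (ln C)) \<partial>lborel)"
  proof (rule nn_integral_mono)
    fix x
    have "ennreal (max 0 (p x * ln (p x))) \<le> ennreal (p x * max 0 (ln C))"
      by (rule ennreal_leI, rule pt[OF p(2) C(1)])
    also have "\<dots> = ennreal (p x) * ennreal (max 0 (ln C))"
      using p(2)[of x] by (rule ennreal_mult) simp
    finally show "ennreal (max 0 (p x * ln (p x))) \<le> ennreal (p x) * ennreal (max 0 (ln C))" .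
  qed
  also have "\<dots> = ennreal (max 0 (ln C))" using p(3) by (simp add: nn_integral_multc)
  finally show ?thesis by (simp add: le_less_trans)
qed

lemma pos_conv:
  assumes "prob_space M" and [measurable_cong]: "sets M = sets borel" and pd: "pdens p"
  shows "(\<integral>\<^sup>+x. ennreal (max 0 (convr M p x * ln (convr M p x))) \<partial>lborel)
       \<le> (\<integral>\<^sup>+x. ennreal (max 0 (p x * ln (p x))) \<partial>lborel)"
proof -
  interpret M: prob_space M by fact
  have fM: "finite_measure M" by unfold_locales
  note p = pdensD[OF pd]
  have [measurable]: "p \<in> borel_measurable borel" by (rule p(1))
  have ae: "AE x in lborel. (\<integral>\<^sup>+y. ennreal (p (x - y)) \<partial>M) = ennreal (convr M p x)"
    by (rule convr_pdens(2)[OF assms])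
  have "(\<integral>\<^sup>+x. ennreal (max 0 (convr M p x * ln (convr M p x))) \<partial>lborel)
      \<le> (\<integral>\<^sup>+x. \<integral>\<^sup>+y. ennreal (max 0 (p (x - y) * ln (p (x - y)))) \<partial>M \<partial>lborel)"
  proof (rule nn_integral_mono_AE)
    show "AE x in lborel. ennreal (max 0 (convr M p x * ln (convr M p x))) \<le> (\<integral>\<^sup>+y. ennreal (max 0 (p (x - y) * ln (p (x - y)))) \<partial>M)"
      using ae
    proof eventually_elim
      case (elim x)
      note i = conv_integral[OF fM assms(2) p(1) p(2) elim]
      show ?case by (rule jensen_pos[OF assms(1) i(1) p(2) i(2)[symmetric]])
    qed
  qed
  also have "\<dots> = (\<integral>\<^sup>+x. ennreal (max 0 (p x * ln (p x))) \<partial>lborel)"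
    using conv_total[OF fM assms(2), of "\<lambda>x. ennreal (max 0 (p x * ln (p x)))"] by (simp add: M.emeasure_space_1)
  finally show ?thesis .
qed

lemma convr_bounded:
  assumes "prob_space M" and nn: "\<And>x. 0 \<le> p x" and C: "\<And>x. p x \<le> C"
  shows "convr M p x \<le> C"
proof -
  interpret M: prob_space M by fact
  have "(\<integral>\<^sup>+y. ennreal (p (x - y)) \<partial>M) \<le> (\<integral>\<^sup>+y. ennreal C \<partial>M)"
    using C by (intro nn_integral_mono ennreal_leI) auto
  also have "\<dots> = ennreal C" by (simp add: M.emeasure_space_1)
  finally have "(\<integral>\<^sup>+y. ennreal (p (x - y)) \<partial>M) \<le> ennreal C" .
  then show ?thesis unfolding convr_def
    using C[of 0] nn[of 0] by (metis enn2real_ennreal enn2real_mono ennreal_less_top order_trans)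
qed



definition LM :: "real measure \<Rightarrow> ennreal" where
  "LM \<rho> = (\<integral>\<^sup>+x. ennreal (ln (1 + \<bar>x\<bar>)) \<partial>\<rho>)"

lemma LM_density:
  assumes [measurable]: "p \<in> borel_measurable borel" and nn: "\<And>x. 0 \<le> p x"
  shows "LM (density lborel (\<lambda>x. ennreal (p x))) = (\<integral>\<^sup>+x. ennreal (p x * ln (1 + \<bar>x\<bar>)) \<partial>lborel)"
  unfolding LM_def
  by (subst nn_integral_density) (auto intro!: nn_integral_cong simp: ennreal_mult nn)

lemma ln_add_abs: "ln (1 + \<bar>x + y\<bar>) \<le> ln (1 + \<bar>x\<bar>) + ln (1 + \<bar>y::real\<bar>)"
proof -
  have "1 + \<bar>x + y\<bar> \<le> (1 + \<bar>x\<bar>) * (1 + \<bar>y\<bar>)"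
  proof -
    have "0 \<le> \<bar>x\<bar> * \<bar>y\<bar>" by simp
    moreover have "(1 + \<bar>x\<bar>) * (1 + \<bar>y\<bar>) = 1 + \<bar>x\<bar> + \<bar>y\<bar> + \<bar>x\<bar> * \<bar>y\<bar>" by (simp add: algebra_simps)
    ultimately show ?thesis using abs_triangle_ineq[of x y] by linarith
  qed
  then have "ln (1 + \<bar>x + y\<bar>) \<le> ln ((1 + \<bar>x\<bar>) * (1 + \<bar>y\<bar>))" by (intro ln_mono) auto
  also have "\<dots> = ln (1 + \<bar>x\<bar>) + ln (1 + \<bar>y\<bar>)"
  proof -
    have "1 + \<bar>x\<bar> \<noteq> 0" "1 + \<bar>y\<bar> \<noteq> 0" by linarith+
    then show ?thesis by (simp add: ln_mult)
  qed
  finally show ?thesis .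
qed

lemma LM_conv:
  assumes "prob_space M" "prob_space N" and [measurable_cong]: "sets M = sets borel" "sets N = sets borel"
  shows "LM (M \<star> N) \<le> LM M + LM N"
proof -
  interpret M: prob_space M by fact
  interpret N: prob_space N by fact
  have "LM (M \<star> N) = (\<integral>\<^sup>+x. \<integral>\<^sup>+y. ennreal (ln (1 + \<bar>x + y\<bar>)) \<partial>N \<partial>M)"
    unfolding LM_def using assms(3,4) by (intro nn_integral_convolution) (auto intro: M.finite_measure_axioms N.finite_measure_axioms)
  also have "\<dots> \<le> (\<integral>\<^sup>+x. \<integral>\<^sup>+y. ennreal (ln (1 + \<bar>x\<bar>)) + ennreal (ln (1 + \<bar>y\<bar>)) \<partial>N \<partial>M)"
    by (intro nn_integral_mono) (auto simp: ennreal_plus[symmetric] simp del: ennreal_plus intro!: ennreal_leI ln_add_abs)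
  also have "\<dots> = (\<integral>\<^sup>+x. ennreal (ln (1 + \<bar>x\<bar>)) + LM N \<partial>M)"
    unfolding LM_def by (intro nn_integral_cong) (simp add: nn_integral_add N.emeasure_space_1)
  also have "\<dots> = LM M + LM N"
    unfolding LM_def by (simp add: nn_integral_add M.emeasure_space_1)
  finally show ?thesis .
qed

lemma LM_dil:
  assumes [measurable_cong]: "sets M = sets borel" and t: "0 < t" "t \<le> 1"
  shows "LM (dil t M) \<le> LM M"
  unfolding LM_def dil_def
proof (subst nn_integral_distr)
  show "(\<integral>\<^sup>+x. ennreal (ln (1 + \<bar>t * x\<bar>)) \<partial>M) \<le> (\<integral>\<^sup>+x. ennreal (ln (1 + \<bar>x\<bar>)) \<partial>M)"
  proof (intro nn_integral_mono ennreal_leI ln_mono)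
    fix x
    show "1 + \<bar>t * x\<bar> \<le> 1 + \<bar>x\<bar>" using t by (simp add: abs_mult mult_left_le_one_le)
  qed auto
qed auto

lemma LM_chi: "LM (density lborel (indicator {0..1::real})) \<le> 1"
proof -
  have "LM (density lborel (indicator {0..1::real})) = (\<integral>\<^sup>+x. indicator {0..1::real} x * ennreal (ln (1 + \<bar>x\<bar>)) \<partial>lborel)"
    unfolding LM_def by (subst nn_integral_density) auto
  also have "\<dots> \<le> (\<integral>\<^sup>+x. indicator {0..1::real} x \<partial>lborel)"
  proof (intro nn_integral_mono)
    fix x :: real
    show "indicator {0..1} x * ennreal (ln (1 + \<bar>x\<bar>)) \<le> indicator {0..1} x"
    proof (cases "x \<in> {0..1}")
      case True
      then have "ln (1 + \<bar>x\<bar>) \<le> 1" using ln_add_one_self_le_self[of "\<bar>x\<bar>"] by auto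
      then show ?thesis using True by (simp add: ennreal_leI)
    qed simp
  qed
  also have "\<dots> = 1" by simp
  finally show ?thesis .
qed

lemma LM_finite:
  assumes "integrable M (\<lambda>x. ln (1 + \<bar>x::real\<bar>))"
  shows "LM M < \<infinity>"
proof -
  have "(\<integral>\<^sup>+x. ennreal (norm (ln (1 + \<bar>x::real\<bar>))) \<partial>M) < \<infinity>"
    using assms by (simp only: integrable_iff_bounded)
  also have "(\<integral>\<^sup>+x. ennreal (norm (ln (1 + \<bar>x::real\<bar>))) \<partial>M) = LM M"
    unfolding LM_def by (intro nn_integral_cong) simp
  finally show ?thesis .
qed



abbreviation chi1 :: "real \<Rightarrow> real" where "chi1 \<equiv> indicator {0..1}"

lemma chi_density: "density lborel (indicator {0..1::real}) = density lborel (\<lambda>x. ennreal (chi1 x))"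
  by (simp add: ennreal_indicator)

lemma pdens_chi: "pdens chi1"
  unfolding pdens_def by (auto simp: ennreal_indicator)

lemma chi_ent0: "integrable lborel (\<lambda>x. chi1 x * ln (chi1 x))" "(\<integral>x. chi1 x * ln (chi1 x) \<partial>lborel) = 0"
proof -
  have "(\<lambda>x. chi1 x * ln (chi1 x)) = (\<lambda>x. 0)" by (auto simp: indicator_def)
  then show "integrable lborel (\<lambda>x. chi1 x * ln (chi1 x))" "(\<integral>x. chi1 x * ln (chi1 x) \<partial>lborel) = 0"
    by simp_all
qed

lemma scale_bounded: "0 < t \<Longrightarrow> (\<And>x. p x \<le> C) \<Longrightarrow> scale t p x \<le> C / t"
  unfolding scale_def by (simp add: divide_right_mono)

lemma ent_finite:
  assumes pd: "pdens p" and i: "integrable lborel (\<lambda>x. p x * ln (p x))"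
  shows "ent (density lborel (\<lambda>x. ennreal (p x))) = ereal (\<integral>x. p x * ln (p x) \<partial>lborel)"
proof -
  note pp = pdensD[OF pd]
  show ?thesis
    using pp(1,2) by (subst ent_density) (auto intro: ent_dens_integrable[OF i])
qed

lemma ent_pos_finite:
  "integrable lborel (\<lambda>x. p x * ln (p x)) \<Longrightarrow> (\<integral>\<^sup>+x. ennreal (max 0 (p x * ln (p x))) \<partial>lborel) < \<infinity>"
  by (subst nn_pos_part) auto

lemma integrable_ae_transfer:
  fixes p q :: "real \<Rightarrow> real"
  assumes "AE x in lborel. p x = q x" "integrable lborel (\<lambda>x. p x * ln (p x))"
    and [measurable]: "p \<in> borel_measurable borel" "q \<in> borel_measurable borel"
  shows "integrable lborel (\<lambda>x. q x * ln (q x))"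
    "(\<integral>x. q x * ln (q x) \<partial>lborel) = (\<integral>x. p x * ln (p x) \<partial>lborel)"
proof -
  have ae: "AE x in lborel. p x * ln (p x) = q x * ln (q x)" using assms(1) by eventually_elim simp
  show "integrable lborel (\<lambda>x. q x * ln (q x))"
  proof (rule integrable_cong_AE_imp[OF assms(2) _ ae])
    show "(\<lambda>x. q x * ln (q x)) \<in> borel_measurable lborel" by measurable
  qed
  show "(\<integral>x. q x * ln (q x) \<partial>lborel) = (\<integral>x. p x * ln (p x) \<partial>lborel)"
    using ae by (intro integral_cong_AE[symmetric]) auto
qed



lemma per_t:
  fixes \<mu> \<nu> :: "real measure" and q :: "real \<Rightarrow> real"
  assumes "prob_space \<nu>" and "prob_space \<mu>"
    and "sets \<mu> = sets borel"
    and "q \<in> borel_measurable borel" and "\<And>x. 0 \<le> q x"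
    and "\<nu> = density lborel (\<lambda>x. ennreal (q x))"
    and "integrable lborel (\<lambda>x. q x * ln (q x))"
    and "integrable \<nu> (\<lambda>x. ln (1 + \<bar>x\<bar>))"
    and "integrable \<mu> (\<lambda>x. ln (1 + \<bar>x\<bar>))"
    and t: "0 < t" "t < 1"
  shows "\<exists>a b. ent (\<mu> \<star> dil t \<nu>) = ereal a
     \<and> ent (\<mu> \<star> dil t (density lborel (indicator {0..1::real}))) = ereal b
     \<and> \<bar>a - b\<bar> \<le> \<bar>(\<integral>x. q x * ln (q x) \<partial>lborel) - (\<integral>x. convr \<nu> chi1 x * ln (convr \<nu> chi1 x) \<partial>lborel)\<bar>
        + \<bar>\<integral>x. convr \<nu> chi1 x * ln (convr \<nu> chi1 x) \<partial>lborel\<bar>"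
proof -
  note mu_sets[measurable_cong] = assms(3)
  have nu_sets[measurable_cong]: "sets \<nu> = sets borel" using assms(6) by simp
  have [measurable]: "q \<in> borel_measurable borel" by fact
  have pq: "pdens q"
  proof -
    have "(\<integral>\<^sup>+x. ennreal (q x) \<partial>lborel) = emeasure \<nu> (space \<nu>)"
      using assms(6) by (simp add: emeasure_density)
    also have "\<dots> = 1" using prob_space.emeasure_space_1[OF assms(1)] .
    finally show ?thesis unfolding pdens_def using assms(4,5) by auto
  qed
  have nu_eq: "\<nu> = density lborel (\<lambda>x. ennreal (q x))" by fact
  define chi where "chi = density lborel (\<lambda>x. ennreal (chi1 x))"
  have chi_prob: "prob_space chi" unfolding chi_def by (rule pdens_prob_space[OF pdens_chi])
  have chi_sets[measurable_cong]: "sets chi = sets borel" unfolding chi_def by simp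
  have LMnu: "LM \<nu> < \<infinity>" by (rule LM_finite[OF assms(8)])
  have LMmu: "LM \<mu> < \<infinity>" by (rule LM_finite[OF assms(9)])
  have LMchi: "LM chi < \<infinity>" using LM_chi unfolding chi_def chi_density[symmetric]
    by (simp add: le_less_trans)
  define p1 where "p1 = scale t q"
  define p2 where "p2 = scale t chi1"
  have pp1: "pdens p1" unfolding p1_def by (rule scale_pdens[OF t(1) pq])
  have pp2: "pdens p2" unfolding p2_def by (rule scale_pdens[OF t(1) pdens_chi])
  have ip1: "integrable lborel (\<lambda>x. p1 x * ln (p1 x))"
    and Hp1: "(\<integral>x. p1 x * ln (p1 x) \<partial>lborel) = (\<integral>x. q x * ln (q x) \<partial>lborel) - ln t"
    unfolding p1_def by (rule scale_entropy[OF t(1) pq assms(7)])+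
  have ip2: "integrable lborel (\<lambda>x. p2 x * ln (p2 x))"
    and Hp2: "(\<integral>x. p2 x * ln (p2 x) \<partial>lborel) = - ln t"
    unfolding p2_def using scale_entropy[OF t(1) pdens_chi chi_ent0(1)] chi_ent0(2) by simp_all
  define Dn where "Dn = dil t \<nu>"
  define Dc where "Dc = dil t chi"
  have Dn_eq: "Dn = density lborel (\<lambda>x. ennreal (p1 x))"
    unfolding Dn_def p1_def nu_eq by (rule dil_density[OF t(1)]) (use assms(5) in auto)
  have Dc_eq: "Dc = density lborel (\<lambda>x. ennreal (p2 x))"
    unfolding Dc_def p2_def chi_def by (rule dil_density[OF t(1)]) auto
  have Dn_prob: "prob_space Dn" unfolding Dn_eq by (rule pdens_prob_space[OF pp1])
  have Dc_prob: "prob_space Dc" unfolding Dc_eq by (rule pdens_prob_space[OF pp2])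
  have Dn_sets[measurable_cong]: "sets Dn = sets borel" unfolding Dn_eq by simp
  have Dc_sets[measurable_cong]: "sets Dc = sets borel" unfolding Dc_eq by simp
  have LMDn: "LM Dn < \<infinity>" unfolding Dn_def using LM_dil[OF nu_sets t(1)] t LMnu by (simp add: le_less_trans)
  have LMDc: "LM Dc < \<infinity>" unfolding Dc_def using LM_dil[OF chi_sets t(1)] t LMchi by (simp add: le_less_trans)
  have fDn: "finite_measure Dn" and fDc: "finite_measure Dc" and fmu: "finite_measure \<mu>"
    using Dn_prob Dc_prob assms(2) by (simp_all add: prob_space_def)
  define c where "c = convr \<nu> chi1"
  have pc: "pdens c" and dc: "\<nu> \<star> chi = density lborel (\<lambda>x. ennreal (c x))"
    unfolding c_def chi_def by (rule convr_pdens[OF assms(1) nu_sets pdens_chi])+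
  have c1: "c x \<le> 1" for x unfolding c_def by (rule convr_bounded[OF assms(1)]) auto
  have ic: "integrable lborel (\<lambda>x. c x * ln (c x))"
  proof (rule entropy_integrable[OF pc])
    have "LM (\<nu> \<star> chi) \<le> LM \<nu> + LM chi" by (rule LM_conv[OF assms(1) chi_prob nu_sets chi_sets])
    also have "\<dots> < \<infinity>" using LMnu LMchi by simp
    finally show "(\<integral>\<^sup>+x. ennreal (c x * ln (1 + \<bar>x\<bar>)) \<partial>lborel) < \<infinity>"
      unfolding dc using pdensD[OF pc] by (simp add: LM_density)
    show "(\<integral>\<^sup>+x. ennreal (max 0 (c x * ln (c x))) \<partial>lborel) < \<infinity>"
      by (rule pos_bounded[OF pc c1]) simp
  qed
  define g1 where "g1 = convr Dc p1"
  define g2 where "g2 = convr Dn p2"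
  have g2_eq: "g2 = scale t c"
    unfolding g2_def c_def p2_def Dn_def by (intro ext convr_dil[OF t(1) nu_sets]) auto
  have pg1: "pdens g1" and dg1: "Dc \<star> density lborel (\<lambda>x. ennreal (p1 x)) = density lborel (\<lambda>x. ennreal (g1 x))"
    unfolding g1_def by (rule convr_pdens[OF Dc_prob Dc_sets pp1])+
  have pg2: "pdens g2" and dg2: "Dn \<star> density lborel (\<lambda>x. ennreal (p2 x)) = density lborel (\<lambda>x. ennreal (g2 x))"
    unfolding g2_def by (rule convr_pdens[OF Dn_prob Dn_sets pp2])+
  have ig2: "integrable lborel (\<lambda>x. g2 x * ln (g2 x))"
    and Hg2: "(\<integral>x. g2 x * ln (g2 x) \<partial>lborel) = (\<integral>x. c x * ln (c x) \<partial>lborel) - ln t"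
    unfolding g2_eq by (rule scale_entropy[OF t(1) pc ic])+
  have dg12: "density lborel (\<lambda>x. ennreal (g1 x)) = density lborel (\<lambda>x. ennreal (g2 x))"
  proof -
    have "(Dc \<star> Dn) = (Dn \<star> Dc)" using fDc fDn Dn_sets Dc_sets by (intro convolution_commutative) auto
    then show ?thesis using dg1 dg2 unfolding Dn_eq[symmetric] Dc_eq[symmetric] by simp
  qed
  have ae12: "AE x in lborel. g2 x = g1 x" using density_eq_ae[OF pg2 pg1 dg12[symmetric]] .
  have ig1: "integrable lborel (\<lambda>x. g1 x * ln (g1 x))"
    and Hg1: "(\<integral>x. g1 x * ln (g1 x) \<partial>lborel) = (\<integral>x. g2 x * ln (g2 x) \<partial>lborel)"
    using integrable_ae_transfer[OF ae12 ig2 pdensD(1)[OF pg2] pdensD(1)[OF pg1]] by auto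
  have LMg2: "LM (density lborel (\<lambda>x. ennreal (g2 x))) < \<infinity>"
  proof -
    have "LM (density lborel (\<lambda>x. ennreal (g2 x))) = LM (Dn \<star> Dc)" using dg2 Dc_eq by simp
    also have "\<dots> \<le> LM Dn + LM Dc" by (rule LM_conv[OF Dn_prob Dc_prob Dn_sets Dc_sets])
    also have "\<dots> < \<infinity>" using LMDn LMDc by simp
    finally show ?thesis .
  qed
  define F1 where "F1 = convr \<mu> p1"
  define F2 where "F2 = convr \<mu> p2"
  define G1 where "G1 = convr \<mu> g1"
  define G2 where "G2 = convr \<mu> g2"
  have pF1: "pdens F1" and dF1: "\<mu> \<star> density lborel (\<lambda>x. ennreal (p1 x)) = density lborel (\<lambda>x. ennreal (F1 x))"
    unfolding F1_def by (rule convr_pdens[OF assms(2) mu_sets pp1])+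
  have pF2: "pdens F2" and dF2: "\<mu> \<star> density lborel (\<lambda>x. ennreal (p2 x)) = density lborel (\<lambda>x. ennreal (F2 x))"
    unfolding F2_def by (rule convr_pdens[OF assms(2) mu_sets pp2])+
  have pG1: "pdens G1" and dG1: "\<mu> \<star> density lborel (\<lambda>x. ennreal (g1 x)) = density lborel (\<lambda>x. ennreal (G1 x))"
    unfolding G1_def by (rule convr_pdens[OF assms(2) mu_sets pg1])+
  have pG2: "pdens G2" and dG2: "\<mu> \<star> density lborel (\<lambda>x. ennreal (g2 x)) = density lborel (\<lambda>x. ennreal (G2 x))"
    unfolding G2_def by (rule convr_pdens[OF assms(2) mu_sets pg2])+
  have iF1: "integrable lborel (\<lambda>x. F1 x * ln (F1 x))"
  proof (rule entropy_integrable[OF pF1])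
    have "LM (\<mu> \<star> Dn) \<le> LM \<mu> + LM Dn" by (rule LM_conv[OF assms(2) Dn_prob mu_sets Dn_sets])
    also have "\<dots> < \<infinity>" using LMmu LMDn by simp
    finally show "(\<integral>\<^sup>+x. ennreal (F1 x * ln (1 + \<bar>x\<bar>)) \<partial>lborel) < \<infinity>"
      using dF1 pdensD[OF pF1] unfolding Dn_eq by (simp add: LM_density)
    have "(\<integral>\<^sup>+x. ennreal (max 0 (F1 x * ln (F1 x))) \<partial>lborel) \<le> (\<integral>\<^sup>+x. ennreal (max 0 (p1 x * ln (p1 x))) \<partial>lborel)"
      unfolding F1_def by (rule pos_conv[OF assms(2) mu_sets pp1])
    also have "\<dots> < \<infinity>" by (rule ent_pos_finite[OF ip1])
    finally show "(\<integral>\<^sup>+x. ennreal (max 0 (F1 x * ln (F1 x))) \<partial>lborel) < \<infinity>" .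
  qed
  have p2b: "p2 x \<le> 1 / t" for x unfolding p2_def by (rule scale_bounded[OF t(1)]) auto
  have g2b: "g2 x \<le> 1 / t" for x unfolding g2_eq by (rule scale_bounded[OF t(1) c1])
  have iF2: "integrable lborel (\<lambda>x. F2 x * ln (F2 x))"
  proof (rule entropy_integrable[OF pF2])
    have "LM (\<mu> \<star> Dc) \<le> LM \<mu> + LM Dc" by (rule LM_conv[OF assms(2) Dc_prob mu_sets Dc_sets])
    also have "\<dots> < \<infinity>" using LMmu LMDc by simp
    finally show "(\<integral>\<^sup>+x. ennreal (F2 x * ln (1 + \<bar>x\<bar>)) \<partial>lborel) < \<infinity>"
      using dF2 pdensD[OF pF2] unfolding Dc_eq by (simp add: LM_density)
    have b: "F2 x \<le> 1 / t" for x unfolding F2_def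
      by (rule convr_bounded[OF assms(2) pdensD(2)[OF pp2] p2b])
    show "(\<integral>\<^sup>+x. ennreal (max 0 (F2 x * ln (F2 x))) \<partial>lborel) < \<infinity>"
      by (rule pos_bounded[OF pF2 b]) (use t in simp)
  qed
  have iG2: "integrable lborel (\<lambda>x. G2 x * ln (G2 x))"
  proof (rule entropy_integrable[OF pG2])
    have "LM (\<mu> \<star> density lborel (\<lambda>x. ennreal (g2 x))) \<le> LM \<mu> + LM (density lborel (\<lambda>x. ennreal (g2 x)))"
      by (rule LM_conv[OF assms(2) pdens_prob_space[OF pg2] mu_sets]) simp
    also have "\<dots> < \<infinity>" using LMmu LMg2 by simp
    finally show "(\<integral>\<^sup>+x. ennreal (G2 x * ln (1 + \<bar>x\<bar>)) \<partial>lborel) < \<infinity>"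
      using dG2 pdensD[OF pG2] by (simp add: LM_density)
    have b: "G2 x \<le> 1 / t" for x unfolding G2_def
      by (rule convr_bounded[OF assms(2) pdensD(2)[OF pg2] g2b])
    show "(\<integral>\<^sup>+x. ennreal (max 0 (G2 x * ln (G2 x))) \<partial>lborel) < \<infinity>"
      by (rule pos_bounded[OF pG2 b]) (use t in simp)
  qed
  have "density lborel (\<lambda>x. ennreal (G2 x)) = density lborel (\<lambda>x. ennreal (G1 x))"
    using dG1 dG2 dg12 by simp
  then have aeG: "AE x in lborel. G2 x = G1 x" by (rule density_eq_ae[OF pG2 pG1])
  have iG1: "integrable lborel (\<lambda>x. G1 x * ln (G1 x))"
    and HG1: "(\<integral>x. G1 x * ln (G1 x) \<partial>lborel) = (\<integral>x. G2 x * ln (G2 x) \<partial>lborel)"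
    using integrable_ae_transfer[OF aeG iG2 pdensD(1)[OF pG2] pdensD(1)[OF pG1]] by auto
  have M1: "(\<integral>x. G1 x * ln (G1 x) \<partial>lborel) \<le> (\<integral>x. F1 x * ln (F1 x) \<partial>lborel)"
    "(\<integral>x. F1 x * ln (F1 x) \<partial>lborel) - (\<integral>x. G1 x * ln (G1 x) \<partial>lborel)
       \<le> (\<integral>x. p1 x * ln (p1 x) \<partial>lborel) - (\<integral>x. g1 x * ln (g1 x) \<partial>lborel)"
    using main_ineq[OF assms(2) mu_sets Dc_prob Dc_sets pp1 ip1 ig1[unfolded g1_def]
      iF1[unfolded F1_def] iG1[unfolded G1_def g1_def]]
    unfolding F1_def G1_def g1_def by auto
  have M2: "(\<integral>x. G2 x * ln (G2 x) \<partial>lborel) \<le> (\<integral>x. F2 x * ln (F2 x) \<partial>lborel)"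
    "(\<integral>x. F2 x * ln (F2 x) \<partial>lborel) - (\<integral>x. G2 x * ln (G2 x) \<partial>lborel)
       \<le> (\<integral>x. p2 x * ln (p2 x) \<partial>lborel) - (\<integral>x. g2 x * ln (g2 x) \<partial>lborel)"
    using main_ineq[OF assms(2) mu_sets Dn_prob Dn_sets pp2 ip2 ig2[unfolded g2_def]
      iF2[unfolded F2_def] iG2[unfolded G2_def g2_def]]
    unfolding F2_def G2_def g2_def by auto
  have e1: "ent (\<mu> \<star> dil t \<nu>) = ereal (\<integral>x. F1 x * ln (F1 x) \<partial>lborel)"
    using dF1 ent_finite[OF pF1 iF1] unfolding Dn_def[symmetric] Dn_eq by simp
  have e2: "ent (\<mu> \<star> dil t (density lborel (indicator {0..1::real}))) = ereal (\<integral>x. F2 x * ln (F2 x) \<partial>lborel)"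
    using dF2 ent_finite[OF pF2 iF2] unfolding chi_density chi_def[symmetric] Dc_def[symmetric] Dc_eq by simp
  show ?thesis
    unfolding c_def[symmetric]
    using e1 e2 M1 M2 Hp1 Hp2 Hg1 Hg2 HG1 by (intro exI conjI) (auto simp: abs_le_iff)
qed



lemma Liminf_close:
  fixes a b :: "'a \<Rightarrow> real"
  assumes lim: "((\<lambda>t. a t - b t) \<longlongrightarrow> 0) F"
  shows "Liminf F (\<lambda>t. ereal (a t)) \<le> Liminf F (\<lambda>t. ereal (b t))"
proof (subst le_Liminf_iff, intro allI impI)
  fix y assume y: "y < Liminf F (\<lambda>t. ereal (a t))"
  show "\<forall>\<^sub>F t in F. y < ereal (b t)"
  proof (cases y)
    case MInf then show ?thesis by simp
  next
    case PInf then show ?thesis using y by simp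
  next
    case (real r)
    obtain z where z: "y < z" "z < Liminf F (\<lambda>t. ereal (a t))" using y dense by blast
    define z' where "z' = min (real_of_ereal z) (r + 1)"
    have zr: "r < z'" using z real unfolding z'_def by (cases z) auto
    have "ereal z' \<le> z" using z real unfolding z'_def by (cases z) auto
    then have "ereal z' < Liminf F (\<lambda>t. ereal (a t))" using z by simp
    then have ev1: "\<forall>\<^sub>F t in F. ereal z' < ereal (a t)"
      using le_Liminf_iff[of "Liminf F (\<lambda>t. ereal (a t))" F "\<lambda>t. ereal (a t)"] by blast
    have ev2: "\<forall>\<^sub>F t in F. dist (a t - b t) 0 < z' - r"
      using lim zr by (auto simp: tendsto_iff)
    show ?thesis using ev1 ev2
    proof eventually_elim
      case (elim t)
      then show ?case using real by (auto simp: dist_real_def)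
    qed
  qed
qed

lemma Liminf_close_eq:
  fixes a b :: "'a \<Rightarrow> real"
  assumes lim: "((\<lambda>t. a t - b t) \<longlongrightarrow> 0) F"
  shows "Liminf F (\<lambda>t. ereal (a t)) = Liminf F (\<lambda>t. ereal (b t))"
proof (rule antisym)
  show "Liminf F (\<lambda>t. ereal (a t)) \<le> Liminf F (\<lambda>t. ereal (b t))" by (rule Liminf_close[OF lim])
  have "((\<lambda>t. b t - a t) \<longlongrightarrow> 0) F" using tendsto_minus[OF lim] by simp
  then show "Liminf F (\<lambda>t. ereal (b t)) \<le> Liminf F (\<lambda>t. ereal (a t))" by (rule Liminf_close)
qed

lemma inv_ln_lim: "((\<lambda>t::real. K / \<bar>ln t\<bar>) \<longlongrightarrow> 0) (at_right 0)"
  by real_asymp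



theorem theorem2p7:
  fixes \<mu> \<nu> :: "real measure" and q :: "real \<Rightarrow> real"
  assumes "prob_space \<nu>" and "prob_space \<mu>"
    and "sets \<mu> = sets borel"
    and "q \<in> borel_measurable borel" and "\<And>x. 0 \<le> q x"
    and "\<nu> = density lborel (\<lambda>x. ennreal (q x))"
    and "integrable lborel (\<lambda>x. q x * ln (q x))"
    and "integrable \<nu> (\<lambda>x. ln (1 + \<bar>x\<bar>))"
    and "integrable \<mu> (\<lambda>x. ln (1 + \<bar>x\<bar>))"
  shows "Liminf (at_right 0) (\<lambda>t. ent (\<mu> \<star> dil t \<nu>) / ereal \<bar>ln t\<bar>)
       = Liminf (at_right 0)
           (\<lambda>t. ent (\<mu> \<star> dil t (density lborel (indicator {0..1::real})))
                 / ereal \<bar>ln t\<bar>)"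
proof -
  define K where "K = \<bar>(\<integral>x. q x * ln (q x) \<partial>lborel) - (\<integral>x. convr \<nu> chi1 x * ln (convr \<nu> chi1 x) \<partial>lborel)\<bar>
        + \<bar>\<integral>x. convr \<nu> chi1 x * ln (convr \<nu> chi1 x) \<partial>lborel\<bar>"
  define A where "A t = real_of_ereal (ent (\<mu> \<star> dil t \<nu>))" for t
  define B where "B t = real_of_ereal (ent (\<mu> \<star> dil t (density lborel (indicator {0..1::real}))))" for t
  have ev01: "\<forall>\<^sub>F t in at_right (0::real). 0 < t \<and> t < 1"
    unfolding eventually_at_right_field by (intro exI[of _ 1]) auto
  have key: "ent (\<mu> \<star> dil t \<nu>) = ereal (A t) \<and>
      ent (\<mu> \<star> dil t (density lborel (indicator {0..1::real}))) = ereal (B t) \<and> \<bar>A t - B t\<bar> \<le> K"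
    if t0: "0 < t" "t < 1" for t
  proof -
    obtain a b where "ent (\<mu> \<star> dil t \<nu>) = ereal a"
       "ent (\<mu> \<star> dil t (density lborel (indicator {0..1::real}))) = ereal b" "\<bar>a - b\<bar> \<le> K"
      using per_t[OF assms t0] unfolding K_def by blast
    then show ?thesis unfolding A_def B_def by simp
  qed
  have lnz: "\<bar>ln t\<bar> \<noteq> 0" if "0 < t" "t < 1" for t :: real using that by simp
  have "Liminf (at_right 0) (\<lambda>t. ent (\<mu> \<star> dil t \<nu>) / ereal \<bar>ln t\<bar>)
      = Liminf (at_right 0) (\<lambda>t. ereal (A t / \<bar>ln t\<bar>))"
  proof (rule Liminf_eq)
    show "\<forall>\<^sub>F t in at_right 0. ent (\<mu> \<star> dil t \<nu>) / ereal \<bar>ln t\<bar> = ereal (A t / \<bar>ln t\<bar>)"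
      using ev01
    proof eventually_elim
      case (elim t)
      then show ?case using key[of t] lnz[of t] by simp
    qed
  qed
  also have "\<dots> = Liminf (at_right 0) (\<lambda>t. ereal (B t / \<bar>ln t\<bar>))"
  proof (rule Liminf_close_eq)
    show "((\<lambda>t. A t / \<bar>ln t\<bar> - B t / \<bar>ln t\<bar>) \<longlongrightarrow> 0) (at_right 0)"
    proof (rule Lim_null_comparison[OF _ inv_ln_lim[of K]])
      show "\<forall>\<^sub>F t in at_right 0. norm (A t / \<bar>ln t\<bar> - B t / \<bar>ln t\<bar>) \<le> K / \<bar>ln t\<bar>"
        using ev01
      proof eventually_elim
        case (elim t)
        then have "\<bar>A t - B t\<bar> \<le> K" using key by blast
        then have "\<bar>A t - B t\<bar> / \<bar>ln t\<bar> \<le> K / \<bar>ln t\<bar>" by (intro divide_right_mono) auto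
        then show ?case by (simp add: diff_divide_distrib[symmetric])
      qed
    qed
  qed
  also have "\<dots> = Liminf (at_right 0)
           (\<lambda>t. ent (\<mu> \<star> dil t (density lborel (indicator {0..1::real}))) / ereal \<bar>ln t\<bar>)"
  proof (rule Liminf_eq)
    show "\<forall>\<^sub>F t in at_right 0. ereal (B t / \<bar>ln t\<bar>) = ent (\<mu> \<star> dil t (density lborel (indicator {0..1::real}))) / ereal \<bar>ln t\<bar>"
      using ev01
    proof eventually_elim
      case (elim t)
      then show ?case using key[of t] lnz[of t] by simp
    qed
  qed
  finally show ?thesis .
qed

end
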